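(* Let $K$ be a balanced graph with $e_K\ge1$. There are constants $\beta,B,C>0$ such that, for all $p=p(n)\in[0,1]$ with $n^{-1/d_K}\ll p=O(n^{\beta-1/d_K})$, the following holds with probability tending to $1$ as $n\to\infty$ in $\mathbb{G}_{n,p}$, writing $\lambda:=np^{d_K}$: (i) If $G\subseteq K$ is primal for $K$, then any two copies of $G$ are either vertex-disjoint or their intersection is isomorphic to a primal subgraph of $K$. (ii) If $G_0\subsetneq G_1$ are both primal for $K$ and there is no primal $F$ with $G_0\subsetneq F\subsetneq G_1$, then for every copy $G_0'$ of $G_0$, all copies of $G_1$ containing $G_0'$ are vertex-disjoint outside of $V(G_0')$. (iii) If $G_0,G_1$ are as in (ii), then every copy of $G_0$ is contained in at most $B\lambda^{v_{G_1}-v_{G_0}}$ copies of $G_1$. (iv) If $v\in V(K)$ and $G^{(v)}\subseteq K$ is a minimal (with respect to inclusion) primal subgraph of $K$ containing $v$, then for each vertex $x\in[n]$ there is at most one copy of $G^{(v)}$ in which $v$ is mapped onto $x$ (i.e., at most one $(v,G^{(v)})$-extension of $x$). (v) If $G_{\min}\subseteq K$ is a primal subgraph of $K$ with the smallest number of vertices, then every vertex $x\in[n]$ is contained in at most $C\lambda^{v_K-v_{G_{\min}}}$ copies of $K$.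
   Context: $\mathbb{G}_{n,p}$ is the binomial random graph on $[n]$. For a graph $F$ with $v_F\ge1$ vertices and $e_F$ edges, $d_F=e_F/v_F$. A subgraph $J\subseteq K$ with $v_J\ge1$ is primal for $K$ if it maximizes $d_J$ among all such subgraphs; $K$ is balanced if $K$ itself is primal. Copies are subgraphs of $\mathbb{G}_{n,p}$ isomorphic to the given graph. $a\ll b$ means $a/b\to0$ as $n\to\infty$. *)

theory Defs
  imports Complex_Main "HOL-Library.Landau_Symbols"
begin

definition graph :: "'v set \<times> 'v set set \<Rightarrow> bool" where
  "graph G \<longleftrightarrow> finite (fst G) \<and>
     (\<forall>e\<in>snd G. \<exists>a b. a \<noteq> b \<and> a \<in> fst G \<and> b \<in> fst G \<and> e = {a, b})"

definition graph_le :: "'v set \<times> 'v set set \<Rightarrow> 'v set \<times> 'v set set \<Rightarrow> bool" where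
  "graph_le H G \<longleftrightarrow> fst H \<subseteq> fst G \<and> snd H \<subseteq> snd G"

definition subgraph :: "'v set \<times> 'v set set \<Rightarrow> 'v set \<times> 'v set set \<Rightarrow> bool" where
  "subgraph H G \<longleftrightarrow> graph H \<and> graph_le H G"

definition dens :: "'v set \<times> 'v set set \<Rightarrow> real" where
  "dens G = real (card (snd G)) / real (card (fst G))"

definition primal :: "'v set \<times> 'v set set \<Rightarrow> 'v set \<times> 'v set set \<Rightarrow> bool" where
  "primal J K \<longleftrightarrow> subgraph J K \<and> fst J \<noteq> {} \<and>
     (\<forall>J'. subgraph J' K \<and> fst J' \<noteq> {} \<longrightarrow> dens J' \<le> dens J)"

definition balanced :: "'v set \<times> 'v set set \<Rightarrow> bool" where
  "balanced K \<longleftrightarrow> primal K K"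

definition iso_map :: "('v \<Rightarrow> 'w) \<Rightarrow> 'v set \<times> 'v set set \<Rightarrow> 'w set \<times> 'w set set \<Rightarrow> bool" where
  "iso_map \<phi> F H \<longleftrightarrow> bij_betw \<phi> (fst F) (fst H) \<and>
     (\<forall>a\<in>fst F. \<forall>b\<in>fst F. {a, b} \<in> snd F \<longleftrightarrow> {\<phi> a, \<phi> b} \<in> snd H)"

definition isomorphic :: "'v set \<times> 'v set set \<Rightarrow> 'w set \<times> 'w set set \<Rightarrow> bool" where
  "isomorphic F H \<longleftrightarrow> (\<exists>\<phi>. iso_map \<phi> F H)"

definition all_pairs :: "nat \<Rightarrow> nat set set" where
  "all_pairs n = {e. \<exists>a b. a \<noteq> b \<and> a \<in> {1..n} \<and> b \<in> {1..n} \<and> e = {a, b}}"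

text \<open>Probability that G(n,p) (edge set E \<subseteq> all_pairs n, each pair independently with prob. p)
  satisfies P.\<close>
definition gnp_prob :: "nat \<Rightarrow> real \<Rightarrow> (nat set set \<Rightarrow> bool) \<Rightarrow> real" where
  "gnp_prob n p P = (\<Sum>E\<in>{E. E \<subseteq> all_pairs n \<and> P E}.
      p ^ card E * (1 - p) ^ (card (all_pairs n) - card E))"

definition copies :: "'v set \<times> 'v set set \<Rightarrow> nat \<Rightarrow> nat set set \<Rightarrow> (nat set \<times> nat set set) set" where
  "copies F n E = {H. subgraph H ({1..n}, E) \<and> isomorphic F H}"

definition graph_inter :: "'v set \<times> 'v set set \<Rightarrow> 'v set \<times> 'v set set \<Rightarrow> 'v set \<times> 'v set set" where
  "graph_inter H1 H2 = (fst H1 \<inter> fst H2, snd H1 \<inter> snd H2)"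

definition primal_cover :: "'v set \<times> 'v set set \<Rightarrow> 'v set \<times> 'v set set \<Rightarrow> 'v set \<times> 'v set set \<Rightarrow> bool" where
  "primal_cover K G0 G1 \<longleftrightarrow> primal G0 K \<and> primal G1 K \<and> graph_le G0 G1 \<and> G0 \<noteq> G1 \<and>
     \<not> (\<exists>F. primal F K \<and> graph_le G0 F \<and> F \<noteq> G0 \<and> graph_le F G1 \<and> F \<noteq> G1)"

definition prop_i :: "'v set \<times> 'v set set \<Rightarrow> nat \<Rightarrow> nat set set \<Rightarrow> bool" where
  "prop_i K n E \<longleftrightarrow> (\<forall>G. primal G K \<longrightarrow> (\<forall>H1\<in>copies G n E. \<forall>H2\<in>copies G n E.
      fst H1 \<inter> fst H2 = {} \<or> (\<exists>J. primal J K \<and> isomorphic (graph_inter H1 H2) J)))"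

definition prop_ii :: "'v set \<times> 'v set set \<Rightarrow> nat \<Rightarrow> nat set set \<Rightarrow> bool" where
  "prop_ii K n E \<longleftrightarrow> (\<forall>G0 G1. primal_cover K G0 G1 \<longrightarrow>
     (\<forall>H0\<in>copies G0 n E. \<forall>H1\<in>copies G1 n E. \<forall>H2\<in>copies G1 n E.
        graph_le H0 H1 \<and> graph_le H0 H2 \<and> H1 \<noteq> H2 \<longrightarrow>
        (fst H1 - fst H0) \<inter> (fst H2 - fst H0) = {}))"

definition prop_iii :: "'v set \<times> 'v set set \<Rightarrow> real \<Rightarrow> real \<Rightarrow> nat \<Rightarrow> nat set set \<Rightarrow> bool" where
  "prop_iii K B lam n E \<longleftrightarrow> (\<forall>G0 G1. primal_cover K G0 G1 \<longrightarrow>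
     (\<forall>H0\<in>copies G0 n E.
        real (card {H1\<in>copies G1 n E. graph_le H0 H1})
          \<le> B * lam ^ (card (fst G1) - card (fst G0))))"

definition prop_iv :: "'v set \<times> 'v set set \<Rightarrow> nat \<Rightarrow> nat set set \<Rightarrow> bool" where
  "prop_iv K n E \<longleftrightarrow> (\<forall>v\<in>fst K. \<forall>Gv. primal Gv K \<and> v \<in> fst Gv \<and>
       \<not> (\<exists>J. primal J K \<and> v \<in> fst J \<and> graph_le J Gv \<and> J \<noteq> Gv) \<longrightarrow>
     (\<forall>x\<in>{1..n}. card {H\<in>copies Gv n E. \<exists>\<phi>. iso_map \<phi> Gv H \<and> \<phi> v = x} \<le> 1))"

definition prop_v :: "'v set \<times> 'v set set \<Rightarrow> real \<Rightarrow> real \<Rightarrow> nat \<Rightarrow> nat set set \<Rightarrow> bool" where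
  "prop_v K C lam n E \<longleftrightarrow> (\<forall>Gmin. primal Gmin K \<and>
       (\<forall>J. primal J K \<longrightarrow> card (fst Gmin) \<le> card (fst J)) \<longrightarrow>
     (\<forall>x\<in>{1..n}. real (card {H\<in>copies K n E. x \<in> fst H})
        \<le> C * lam ^ (card (fst K) - card (fst Gmin))))"

end

theory Submission
  imports Defs "HOL-Real_Asymp.Real_Asymp"
begin

type_synonym 'v gr = "'v set \<times> 'v set set"

definition img :: "('v \<Rightarrow> 'w) \<Rightarrow> 'v gr \<Rightarrow> 'w gr" where
  "img f G = (f ` fst G, (\<lambda>e. f ` e) ` snd G)"

lemma fst_img[simp]: "fst (img f G) = f ` fst G" and snd_img[simp]: "snd (img f G) = (\<lambda>e. f ` e) ` snd G"
  by (auto simp: img_def)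

lemma graph_edge_sub: "graph G \<Longrightarrow> e \<in> snd G \<Longrightarrow> e \<subseteq> fst G"
  by (auto simp: graph_def)

lemma graph_snd_Pow: "graph G \<Longrightarrow> snd G \<subseteq> Pow (fst G)"
  by (auto simp: graph_def)

lemma graph_fin1: "graph G \<Longrightarrow> finite (fst G)"
  by (auto simp: graph_def)

lemma graph_fin2: "graph G \<Longrightarrow> finite (snd G)"
  using graph_snd_Pow graph_fin1 by (metis finite_Pow_iff finite_subset)

lemma graph_empty_edges: "graph G \<Longrightarrow> fst G = {} \<Longrightarrow> snd G = {}"
  by (auto simp: graph_def)

lemma graph_img: "graph G \<Longrightarrow> inj_on f (fst G) \<Longrightarrow> graph (img f G)"
  unfolding graph_def
proof (intro conjI ballI)
  assume g: "finite (fst G) \<and> (\<forall>e\<in>snd G. \<exists>a b. a \<noteq> b \<and> a \<in> fst G \<and> b \<in> fst G \<and> e = {a, b})"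
    and i: "inj_on f (fst G)"
  show "finite (fst (img f G))" using g by simp
  fix e assume "e \<in> snd (img f G)"
  then obtain e0 where e0: "e0 \<in> snd G" "e = f ` e0" by auto
  then obtain a b where "a \<noteq> b" "a \<in> fst G" "b \<in> fst G" "e0 = {a,b}" using g by blast
  then show "\<exists>a b. a \<noteq> b \<and> a \<in> fst (img f G) \<and> b \<in> fst (img f G) \<and> e = {a, b}"
  proof (intro exI conjI)
    show "f a \<noteq> f b" using i \<open>a \<noteq> b\<close> \<open>a \<in> fst G\<close> \<open>b \<in> fst G\<close> by (meson inj_onD)
    show "f a \<in> fst (img f G)" "f b \<in> fst (img f G)" using \<open>a \<in> fst G\<close> \<open>b \<in> fst G\<close> by auto
    show "e = {f a, f b}" using e0 \<open>e0 = {a,b}\<close> by simp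
  qed
qed

lemma img_inj_edges: "graph G \<Longrightarrow> inj_on f (fst G) \<Longrightarrow> inj_on (\<lambda>e. f ` e) (snd G)"
  by (meson graph_snd_Pow inj_on_image_Pow inj_on_subset)

lemma card_img1: "inj_on f (fst G) \<Longrightarrow> card (fst (img f G)) = card (fst G)"
  by (simp add: card_image)

lemma card_img2: "graph G \<Longrightarrow> inj_on f (fst G) \<Longrightarrow> card (snd (img f G)) = card (snd G)"
  using card_image[OF img_inj_edges] by simp

lemma iso_img: "graph G \<Longrightarrow> inj_on f (fst G) \<Longrightarrow> iso_map f G (img f G)"
  unfolding iso_map_def
proof (intro conjI ballI)
  assume g: "graph G" and i: "inj_on f (fst G)"
  show "bij_betw f (fst G) (fst (img f G))" using i by (simp add: bij_betw_def)
  fix a b assume ab: "a \<in> fst G" "b \<in> fst G"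
  have ii: "inj_on ((`) f) (Pow (fst G))" using i by (rule inj_on_image_Pow)
  show "({a, b} \<in> snd G) = ({f a, f b} \<in> snd (img f G))"
  proof
    assume "{a,b} \<in> snd G"
    then have "f ` {a,b} \<in> (\<lambda>e. f ` e) ` snd G" by (rule imageI)
    then show "{f a, f b} \<in> snd (img f G)" by simp
  next
    assume "{f a, f b} \<in> snd (img f G)"
    then obtain e where e: "e \<in> snd G" "{f a, f b} = f ` e" by auto
    have "e \<in> Pow (fst G)" using e g graph_snd_Pow by blast
    moreover have "{a,b} \<in> Pow (fst G)" using ab by auto
    moreover have "f ` {a,b} = f ` e" using e by simp
    ultimately have "{a,b} = e" using ii by (meson inj_onD)
    then show "{a,b} \<in> snd G" using e by simp
  qed
qed

lemma iso_inj: "iso_map \<phi> F H \<Longrightarrow> inj_on \<phi> (fst F)"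
  by (simp add: iso_map_def bij_betw_def)

lemma iso_eq_img:
  assumes "graph F" "graph H" "iso_map \<phi> F H"
  shows "H = img \<phi> F"
proof -
  have b: "bij_betw \<phi> (fst F) (fst H)" and e: "\<And>a b. a\<in>fst F \<Longrightarrow> b\<in>fst F \<Longrightarrow> {a, b} \<in> snd F \<longleftrightarrow> {\<phi> a, \<phi> b} \<in> snd H"
    using assms(3) by (auto simp: iso_map_def)
  have f: "fst H = \<phi> ` fst F" using b by (simp add: bij_betw_def)
  have "snd H = (\<lambda>e. \<phi> ` e) ` snd F"
  proof
    show "snd H \<subseteq> (\<lambda>e. \<phi> ` e) ` snd F"
    proof
      fix e assume "e \<in> snd H"
      then obtain a' b' where ab: "a' \<in> fst H" "b' \<in> fst H" "e = {a',b'}" using assms(2) by (auto simp: graph_def)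
      then obtain a b where "a \<in> fst F" "b \<in> fst F" "a' = \<phi> a" "b' = \<phi> b" using f by auto
      with e ab \<open>e \<in> snd H\<close> have "{a,b} \<in> snd F" by auto
      then have "\<phi> ` {a,b} \<in> (\<lambda>e. \<phi> ` e) ` snd F" by (rule imageI)
      then show "e \<in> (\<lambda>e. \<phi> ` e) ` snd F" using ab \<open>a' = \<phi> a\<close> \<open>b' = \<phi> b\<close> by simp
    qed
  next
    show "(\<lambda>e. \<phi> ` e) ` snd F \<subseteq> snd H"
    proof
      fix e assume "e \<in> (\<lambda>e. \<phi> ` e) ` snd F"
      then obtain e0 where "e0 \<in> snd F" "e = \<phi> ` e0" by auto
      moreover then obtain a b where "a \<in> fst F" "b \<in> fst F" "e0 = {a,b}" using assms(1) by (auto simp: graph_def)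
      ultimately show "e \<in> snd H" using e by auto
    qed
  qed
  then show ?thesis using f unfolding img_def by (metis prod.collapse)
qed

lemma img_mono: "graph_le S G \<Longrightarrow> graph_le (img f S) (img f G)"
  by (auto simp: graph_le_def)

lemma img_comp: "img g (img f G) = img (g \<circ> f) G"
  by (simp add: img_def image_comp)

lemma img_id_on:
  assumes "graph S" "\<And>x. x \<in> fst S \<Longrightarrow> g (f x) = x"
  shows "img g (img f S) = S"
proof -
  have 0: "\<And>A. A \<subseteq> fst S \<Longrightarrow> (g \<circ> f) ` A = A"
  proof -
    fix A assume A: "A \<subseteq> fst S"
    have "\<And>x. x \<in> A \<Longrightarrow> (g \<circ> f) x = x" using A assms(2) by auto
    then have "(g \<circ> f) ` A = (\<lambda>x. x) ` A" by (intro image_cong refl)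
    then show "(g \<circ> f) ` A = A" by simp
  qed
  have 1: "(g \<circ> f) ` fst S = fst S" by (rule 0) simp
  have "\<And>e. e \<in> snd S \<Longrightarrow> (g \<circ> f) ` e = e"
  proof -
    fix e assume "e \<in> snd S"
    then have "e \<subseteq> fst S" by (rule graph_edge_sub[OF assms(1)])
    then show "(g \<circ> f) ` e = e" by (rule 0)
  qed
  then have "(\<lambda>e. (g \<circ> f) ` e) ` snd S = (\<lambda>e. e) ` snd S" by (intro image_cong refl)
  then have 2: "(\<lambda>e. (g \<circ> f) ` e) ` snd S = snd S" by simp
  have "img (g \<circ> f) S = ((g \<circ> f) ` fst S, (\<lambda>e. (g \<circ> f) ` e) ` snd S)" by (simp add: img_def)
  then have "img (g \<circ> f) S = S" by (simp only: 1 2 prod.collapse)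
  then show ?thesis by (simp only: img_comp)
qed

lemma graph_le_trans: "graph_le A B \<Longrightarrow> graph_le B C \<Longrightarrow> graph_le A C"
  by (auto simp: graph_le_def)

lemma graph_le_refl[simp]: "graph_le A A"
  by (auto simp: graph_le_def)

lemma graph_le_antisym: "graph_le A B \<Longrightarrow> graph_le B A \<Longrightarrow> A = B"
  by (auto simp: graph_le_def prod_eq_iff)

lemma graph_le_card_eq:
  assumes "graph_le A B" "graph B" "card (fst A) = card (fst B)" "card (snd A) = card (snd B)"
  shows "A = B"
proof -
  have "finite (fst B)" "finite (snd B)" using graph_fin1[OF assms(2)] graph_fin2[OF assms(2)] by auto
  then have "fst A = fst B" "snd A = snd B" using assms
    by (auto simp: graph_le_def dest: card_subset_eq)
  then show ?thesis by (simp add: prod_eq_iff)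
qed

lemma subgraph_graph: "graph_le S G \<Longrightarrow> graph G \<Longrightarrow> (\<forall>e\<in>snd S. e \<subseteq> fst S) \<Longrightarrow> graph S"
  unfolding graph_def graph_le_def
  by (metis (no_types, lifting) finite_subset insert_subset subset_iff)

definition sparse :: "real \<Rightarrow> 'v gr \<Rightarrow> bool" where
  "sparse d F \<longleftrightarrow> (\<forall>S. subgraph S F \<longrightarrow> real (card (snd S)) \<le> d * real (card (fst S)))"

lemma sparse_sub: "sparse d F \<Longrightarrow> subgraph S F \<Longrightarrow> sparse d S"
  unfolding sparse_def subgraph_def using graph_le_trans by blast

lemma sparse_img:
  assumes g: "graph F" and i: "inj_on f (fst F)" and s: "sparse d F"
  shows "sparse d (img f F)"
  unfolding sparse_def
proof (intro allI impI)
  fix S assume S: "subgraph S (img f F)"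
  define g where "g = inv_into (fst F) f"
  have gS: "graph S" and le: "graph_le S (img f F)" using S by (auto simp: subgraph_def)
  have ig: "inj_on g (f ` fst F)" unfolding g_def by (rule inj_on_inv_into) simp
  have igS: "inj_on g (fst S)" using ig le by (auto simp: graph_le_def intro: inj_on_subset)
  have "graph_le (img g S) (img g (img f F))" using le by (rule img_mono)
  moreover have "img g (img f F) = F" unfolding g_def using g i by (intro img_id_on) auto
  ultimately have "subgraph (img g S) F" using graph_img[OF gS igS] by (simp add: subgraph_def)
  then have "real (card (snd (img g S))) \<le> d * real (card (fst (img g S)))" using s unfolding sparse_def by blast
  moreover have "card (snd (img g S)) = card (snd S)" by (rule card_img2[OF gS igS])
  moreover have "card (fst (img g S)) = card (fst S)" by (rule card_img1[OF igS])
  ultimately show "real (card (snd S)) \<le> d * real (card (fst S))" by simp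
qed


locale Kset =
  fixes K :: "'a gr"
  assumes gK: "graph K" and bK: "balanced K" and eK: "card (snd K) \<ge> 1"
begin

definition d :: real where "d = dens K"

lemma finK1: "finite (fst K)" using gK by (rule graph_fin1)
lemma finK2: "finite (snd K)" using gK by (rule graph_fin2)

lemma K_ne: "fst K \<noteq> {}"
proof
  assume "fst K = {}"
  then have "snd K = {}" using gK graph_empty_edges by blast
  then show False using eK by simp
qed

lemma vK_pos: "card (fst K) > 0" using K_ne finK1 by (simp add: card_gt_0_iff)

lemma d_pos: "d > 0"
  using vK_pos eK unfolding d_def dens_def by simp

lemma d_eq: "real (card (snd K)) = d * real (card (fst K))"
  using vK_pos unfolding d_def dens_def by simp

lemma primalK: "primal K K" using bK by (simp add: balanced_def)

lemma subgraphK: "subgraph K K" using gK by (simp add: subgraph_def)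

lemma sparseK: "sparse d K"
  unfolding sparse_def
proof (intro allI impI)
  fix S assume S: "subgraph S K"
  show "real (card (snd S)) \<le> d * real (card (fst S))"
  proof (cases "fst S = {}")
    case True
    then have "snd S = {}" using S graph_empty_edges[of S] by (simp add: subgraph_def)
    then show ?thesis using True by simp
  next
    case False
    have "finite (fst S)" using S by (meson subgraph_def graph_fin1)
    then have pos: "real (card (fst S)) > 0" using False by (simp add: card_gt_0_iff)
    have "dens S \<le> dens K" using primalK S False unfolding primal_def by blast
    then have "real (card (snd S)) / real (card (fst S)) \<le> d" by (simp add: dens_def d_def)
    then show ?thesis using pos by (simp add: divide_le_eq mult.commute)
  qed
qed

lemma sparse_subK: "subgraph S K \<Longrightarrow> real (card (snd S)) \<le> d * real (card (fst S))"
  using sparseK by (simp add: sparse_def)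

lemma primal_iff:
  "primal J K \<longleftrightarrow> subgraph J K \<and> fst J \<noteq> {} \<and> real (card (snd J)) = d * real (card (fst J))"
proof
  assume p: "primal J K"
  then have S: "subgraph J K" and ne: "fst J \<noteq> {}" by (auto simp: primal_def)
  have "dens K \<le> dens J" using p subgraphK K_ne unfolding primal_def by blast
  moreover have "finite (fst J)" using S by (meson subgraph_def graph_fin1)
  then have pos: "real (card (fst J)) > 0" using ne by (simp add: card_gt_0_iff)
  ultimately have "d * real (card (fst J)) \<le> real (card (snd J))"
    by (simp add: dens_def d_def le_divide_eq)
  with sparse_subK[OF S] show "subgraph J K \<and> fst J \<noteq> {} \<and> real (card (snd J)) = d * real (card (fst J))"
    using S ne by linarith
next
  assume a: "subgraph J K \<and> fst J \<noteq> {} \<and> real (card (snd J)) = d * real (card (fst J))"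
  have "finite (fst J)" using a by (meson subgraph_def graph_fin1)
  then have pos: "real (card (fst J)) > 0" using a by (simp add: card_gt_0_iff)
  have dJ: "dens J = d" using a pos by (simp add: dens_def)
  show "primal J K" unfolding primal_def
  proof (intro conjI allI impI)
    fix J' assume J': "subgraph J' K \<and> fst J' \<noteq> {}"
    have "finite (fst J')" using J' by (meson subgraph_def graph_fin1)
    then have pos': "real (card (fst J')) > 0" using J' by (simp add: card_gt_0_iff)
    show "dens J' \<le> dens J" using sparse_subK[of J'] J' pos' dJ
      by (simp add: dens_def divide_le_eq mult.commute)
  qed (use a in auto)
qed

lemma primal_I: "subgraph J K \<Longrightarrow> fst J \<noteq> {} \<Longrightarrow> d * real (card (fst J)) \<le> real (card (snd J)) \<Longrightarrow> primal J K"
proof -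
  assume a: "subgraph J K" "fst J \<noteq> {}" "d * real (card (fst J)) \<le> real (card (snd J))"
  have "real (card (snd J)) \<le> d * real (card (fst J))" by (rule sparse_subK[OF a(1)])
  then have "real (card (snd J)) = d * real (card (fst J))" using a(3) by linarith
  then show "primal J K" unfolding primal_iff using a by blast
qed

definition ind :: "'a set \<Rightarrow> 'a gr" where "ind S = (S, {e \<in> snd K. e \<subseteq> S})"

definition eS :: "'a set \<Rightarrow> nat" where "eS S = card {e \<in> snd K. e \<subseteq> S}"

lemma ind_sub: "S \<subseteq> fst K \<Longrightarrow> subgraph (ind S) K"
  unfolding subgraph_def ind_def
  by (intro conjI subgraph_graph[OF _ gK]) (auto simp: graph_le_def)

lemma primal_ind: assumes "primal J K" shows "J = ind (fst J)"
proof -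
  have S: "subgraph J K" and e: "real (card (snd J)) = d * real (card (fst J))"
    using assms primal_iff by auto
  have sub: "fst J \<subseteq> fst K" using S by (auto simp: subgraph_def graph_le_def)
  have le: "snd J \<subseteq> snd (ind (fst J))"
    using S graph_edge_sub[of J] by (auto simp: ind_def subgraph_def graph_le_def)
  have "real (card (snd (ind (fst J)))) \<le> d * real (card (fst J))"
    using sparse_subK[OF ind_sub[OF sub]] by (simp add: ind_def)
  moreover have fin: "finite (snd (ind (fst J)))" using finK2 by (simp add: ind_def)
  ultimately have "snd J = snd (ind (fst J))" using le e
    by (metis (no_types, lifting) card_mono card_subset_eq of_nat_le_iff order_antisym_conv)
  then show ?thesis by (simp add: ind_def prod_eq_iff)
qed

definition P :: "'a set \<Rightarrow> bool" where "P S \<longleftrightarrow> primal (ind S) K"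

lemma P_iff: "P S \<longleftrightarrow> S \<subseteq> fst K \<and> S \<noteq> {} \<and> real (eS S) = d * real (card S)"
proof
  assume "P S"
  then show "S \<subseteq> fst K \<and> S \<noteq> {} \<and> real (eS S) = d * real (card S)"
    unfolding P_def primal_iff by (auto simp: ind_def eS_def subgraph_def graph_le_def)
next
  assume a: "S \<subseteq> fst K \<and> S \<noteq> {} \<and> real (eS S) = d * real (card S)"
  then show "P S" unfolding P_def primal_iff using ind_sub[of S] by (simp add: ind_def eS_def)
qed

lemma primal_P: "primal J K \<Longrightarrow> P (fst J)"
  using primal_ind unfolding P_def by metis

lemma P_primal: "P S \<Longrightarrow> primal (ind S) K" by (simp add: P_def)

lemma eS_le: "S \<subseteq> fst K \<Longrightarrow> real (eS S) \<le> d * real (card S)"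
  using sparse_subK[OF ind_sub] by (simp add: ind_def eS_def)

lemma eS_super: "eS A + eS B \<le> eS (A \<union> B) + eS (A \<inter> B)"
proof -
  let ?X = "{e \<in> snd K. e \<subseteq> A}" and ?Y = "{e \<in> snd K. e \<subseteq> B}"
  have f: "finite ?X" "finite ?Y" using finK2 by auto
  have "card ?X + card ?Y = card (?X \<union> ?Y) + card (?X \<inter> ?Y)" using card_Un_Int[OF f] .
  moreover have "card (?X \<union> ?Y) \<le> eS (A \<union> B)" unfolding eS_def
    by (rule card_mono) (use finK2 in auto)
  moreover have "?X \<inter> ?Y = {e \<in> snd K. e \<subseteq> A \<inter> B}" by auto
  ultimately show ?thesis by (simp add: eS_def)
qed

lemma P_sub: "P S \<Longrightarrow> S \<subseteq> fst K" by (simp add: P_iff)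
lemma P_fin: "P S \<Longrightarrow> finite S" using P_sub finK1 finite_subset by blast

lemma P_Un: assumes "P A" "P B" shows "P (A \<union> B)"
proof -
  have s: "A \<subseteq> fst K" "B \<subseteq> fst K" using assms by (auto simp: P_iff)
  have f: "finite A" "finite B" using assms P_fin by auto
  have c: "card A + card B = card (A \<union> B) + card (A \<inter> B)" using card_Un_Int[OF f] .
  have "real (eS (A \<inter> B)) \<le> d * real (card (A \<inter> B))" using s by (intro eS_le) auto
  moreover have "real (eS A) + real (eS B) \<le> real (eS (A \<union> B)) + real (eS (A \<inter> B))"
    using eS_super[of A B] by linarith
  moreover have "real (eS (A \<union> B)) \<le> d * real (card (A \<union> B))" using s by (intro eS_le) auto
  moreover have "real (card A) + real (card B) = real (card (A \<union> B)) + real (card (A \<inter> B))"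
    using c by (metis of_nat_add)
  ultimately have "real (eS (A \<union> B)) = d * real (card (A \<union> B))"
    using assms unfolding P_iff by (smt (verit, best) distrib_left)
  then show ?thesis using s assms by (auto simp: P_iff)
qed

lemma P_Int: assumes "P A" "P B" "A \<inter> B \<noteq> {}" shows "P (A \<inter> B)"
proof -
  have s: "A \<subseteq> fst K" "B \<subseteq> fst K" using assms by (auto simp: P_iff)
  have f: "finite A" "finite B" using assms P_fin by auto
  have c: "card A + card B = card (A \<union> B) + card (A \<inter> B)" using card_Un_Int[OF f] .
  have "real (eS (A \<inter> B)) \<le> d * real (card (A \<inter> B))" using s by (intro eS_le) auto
  moreover have "real (eS A) + real (eS B) \<le> real (eS (A \<union> B)) + real (eS (A \<inter> B))"
    using eS_super[of A B] by linarith
  moreover have "real (eS (A \<union> B)) \<le> d * real (card (A \<union> B))" using s by (intro eS_le) auto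
  moreover have "real (card A) + real (card B) = real (card (A \<union> B)) + real (card (A \<inter> B))"
    using c by (metis of_nat_add)
  ultimately have "real (eS (A \<inter> B)) = d * real (card (A \<inter> B))"
    using assms unfolding P_iff by (smt (verit, best) distrib_left)
  then show ?thesis using s assms by (auto simp: P_iff)
qed

lemma P_K: "P (fst K)"
  using primal_P[OF primalK] .

definition c :: "'a \<Rightarrow> 'a set" where "c x = (ARG_MIN card S. P S \<and> x \<in> S)"

lemma c_P: assumes "x \<in> fst K" shows "P (c x)" "x \<in> c x"
proof -
  have "P (fst K) \<and> x \<in> fst K" using P_K assms by simp
  then have "P (c x) \<and> x \<in> c x" unfolding c_def by (rule arg_min_nat_lemma[THEN conjunct1])
  then show "P (c x)" "x \<in> c x" by auto
qed

lemma c_min: assumes "P S" "x \<in> S" shows "c x \<subseteq> S"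
proof -
  have xK: "x \<in> fst K" using assms P_sub by auto
  have "P (c x)" "x \<in> c x" using c_P[OF xK] by auto
  then have PI: "P (c x \<inter> S)" using assms P_Int by blast
  have "P (c x \<inter> S) \<and> x \<in> c x \<inter> S" using PI \<open>x \<in> c x\<close> assms by auto
  then have "card (c x) \<le> card (c x \<inter> S)" unfolding c_def by (rule arg_min_nat_le)
  moreover have "finite (c x)" using \<open>P (c x)\<close> P_fin by auto
  ultimately have "c x \<inter> S = c x" by (meson card_seteq inf_le1)
  then show ?thesis by blast
qed

lemma c_sub: "P A \<Longrightarrow> x \<in> A \<Longrightarrow> c x \<subseteq> A" by (rule c_min)

lemma rank_strict:
  assumes "P A" "P B" "A \<subset> B"
  shows "card (c ` A) < card (c ` B)"
proof -
  obtain x where x: "x \<in> B" "x \<notin> A" using assms(3) by blast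
  have xK: "x \<in> fst K" using x assms P_sub by auto
  have "c ` A \<subseteq> c ` B" using assms(3) by auto
  moreover have "c x \<notin> c ` A"
  proof
    assume "c x \<in> c ` A"
    then obtain y where "y \<in> A" "c x = c y" by auto
    then have "c x \<subseteq> A" using c_sub assms(1) by auto
    then show False using c_P(2)[OF xK] x by auto
  qed
  moreover have "c x \<in> c ` B" using x by auto
  moreover have "finite (c ` B)" using P_fin assms(2) by auto
  ultimately show ?thesis by (metis psubsetI psubset_card_mono)
qed

lemma rank_cover:
  assumes "P A" "P B" "A \<subset> B" and nb: "\<And>S. P S \<Longrightarrow> A \<subset> S \<Longrightarrow> S \<subset> B \<Longrightarrow> False"
  shows "card (c ` B) = Suc (card (c ` A))"
proof -
  obtain x where x: "x \<in> B" "x \<notin> A" using assms(3) by blast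
  have key: "c y = c x" if y: "y \<in> B" "y \<notin> A" for y
  proof -
    have all: "z \<in> c w" if "z \<in> B" "z \<notin> A" "w \<in> B" "w \<notin> A" for z w
    proof -
      have wK: "w \<in> fst K" using that assms P_sub by auto
      have "P (A \<union> c w)" using assms(1) c_P[OF wK] P_Un by auto
      moreover have "A \<subset> A \<union> c w" using c_P(2)[OF wK] that by auto
      moreover have "A \<union> c w \<subseteq> B" using c_sub[OF assms(2)] that assms(3) by auto
      ultimately have "A \<union> c w = B" using nb by blast
      then show ?thesis using that by auto
    qed
    have xK: "x \<in> fst K" "y \<in> fst K" using x y assms(2) P_sub by auto
    have "c y \<subseteq> c x"
      by (rule c_min) (use c_P(1)[OF xK(1)] all x y in auto)
    moreover have "c x \<subseteq> c y"
      by (rule c_min) (use c_P(1)[OF xK(2)] all x y in auto)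
    ultimately show ?thesis by auto
  qed
  have "c ` B = insert (c x) (c ` A)"
  proof
    show "c ` B \<subseteq> insert (c x) (c ` A)" using key by auto
    show "insert (c x) (c ` A) \<subseteq> c ` B" using x assms(3) by auto
  qed
  moreover have "c x \<notin> c ` A"
  proof
    assume "c x \<in> c ` A"
    then obtain y where "y \<in> A" "c x = c y" by auto
    then have "c x \<subseteq> A" using c_sub assms(1) by auto
    moreover have "x \<in> fst K" using x assms(2) P_sub by auto
    ultimately show False using c_P(2) x by auto
  qed
  moreover have "finite (c ` A)" using P_fin assms(1) by auto
  ultimately show ?thesis by simp
qed

lemma rank_iso:
  assumes PA: "P A" and PA': "P A'" and inj: "inj_on \<psi> A" and im: "\<psi> ` A = A'"
    and adj: "\<And>a b. a \<in> A \<Longrightarrow> b \<in> A \<Longrightarrow> {a,b} \<in> snd K \<longleftrightarrow> {\<psi> a, \<psi> b} \<in> snd K"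
  shows "card (c ` A') = card (c ` A)"
proof -
  have eSi: "eS (\<psi> ` S) = eS S" if S: "S \<subseteq> A" for S
  proof -
    have "{e \<in> snd K. e \<subseteq> \<psi> ` S} = (\<lambda>e. \<psi> ` e) ` {e \<in> snd K. e \<subseteq> S}"
    proof
      show "{e \<in> snd K. e \<subseteq> \<psi> ` S} \<subseteq> (\<lambda>e. \<psi> ` e) ` {e \<in> snd K. e \<subseteq> S}"
      proof
        fix e assume e: "e \<in> {e \<in> snd K. e \<subseteq> \<psi> ` S}"
        then obtain a' b' where ab: "e = {a',b'}" using gK by (auto simp: graph_def)
        then obtain a b where "a \<in> S" "b \<in> S" "a' = \<psi> a" "b' = \<psi> b" using e by auto
        then have "{a,b} \<in> snd K" using adj S e ab by auto
        then show "e \<in> (\<lambda>e. \<psi> ` e) ` {e \<in> snd K. e \<subseteq> S}"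
          using ab \<open>a \<in> S\<close> \<open>b \<in> S\<close> \<open>a' = \<psi> a\<close> \<open>b' = \<psi> b\<close>
          by (auto intro!: image_eqI[where x="{a,b}"])
      qed
    next
      show "(\<lambda>e. \<psi> ` e) ` {e \<in> snd K. e \<subseteq> S} \<subseteq> {e \<in> snd K. e \<subseteq> \<psi> ` S}"
      proof
        fix e assume "e \<in> (\<lambda>e. \<psi> ` e) ` {e \<in> snd K. e \<subseteq> S}"
        then obtain e0 where e0: "e0 \<in> snd K" "e0 \<subseteq> S" "e = \<psi> ` e0" by auto
        then obtain a b where "e0 = {a,b}" using gK by (auto simp: graph_def)
        then show "e \<in> {e \<in> snd K. e \<subseteq> \<psi> ` S}" using e0 adj S by auto
      qed
    qed
    moreover have "inj_on (\<lambda>e. \<psi> ` e) {e \<in> snd K. e \<subseteq> S}"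
      by (rule inj_on_subset[OF inj_on_image_Pow[OF inj]]) (use S in auto)
    ultimately show ?thesis unfolding eS_def by (simp add: card_image)
  qed
  have Pi: "P (\<psi> ` S) \<longleftrightarrow> P S" if S: "S \<subseteq> A" for S
  proof -
    have "card (\<psi> ` S) = card S" using inj S by (meson card_image inj_on_subset)
    moreover have "\<psi> ` S \<subseteq> fst K" using S im PA' P_sub by auto
    moreover have "S \<subseteq> fst K" using S PA P_sub by auto
    ultimately show ?thesis using eSi[OF S] by (simp add: P_iff)
  qed
  have cc: "c (\<psi> x) = \<psi> ` c x" if x: "x \<in> A" for x
  proof
    have xK: "x \<in> fst K" using x PA P_sub by auto
    have cxA: "c x \<subseteq> A" using c_sub[OF PA x] .
    show "c (\<psi> x) \<subseteq> \<psi> ` c x"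
      by (rule c_min) (use Pi[OF cxA] c_P[OF xK] in auto)
    have yK: "\<psi> x \<in> fst K" using x im PA' P_sub by auto
    have cyA: "c (\<psi> x) \<subseteq> A'" using c_sub[OF PA'] x im by auto
    define T where "T = {a \<in> A. \<psi> a \<in> c (\<psi> x)}"
    have TA: "T \<subseteq> A" by (auto simp: T_def)
    have "\<psi> ` T = c (\<psi> x)" using cyA im by (auto simp: T_def)
    then have "P T" using Pi[OF TA] c_P[OF yK] by simp
    moreover have "x \<in> T" using c_P[OF yK] x by (simp add: T_def)
    ultimately have "c x \<subseteq> T" by (rule c_min)
    then show "\<psi> ` c x \<subseteq> c (\<psi> x)" using \<open>\<psi> ` T = c (\<psi> x)\<close> by auto
  qed
  have "c ` A' = (\<lambda>S. \<psi> ` S) ` (c ` A)"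
    using cc im by (auto simp: image_iff)
  moreover have "inj_on (\<lambda>S. \<psi> ` S) (c ` A)"
    by (rule inj_on_subset[OF inj_on_image_Pow[OF inj]]) (use c_sub[OF PA] in auto)
  ultimately show ?thesis by (simp add: card_image)
qed

end

lemma copyD:
  assumes "H \<in> copies G n E" "graph G"
  shows "\<exists>\<phi>. inj_on \<phi> (fst G) \<and> H = img \<phi> G"
proof -
  have "subgraph H ({1..n}, E)" "isomorphic G H" using assms by (auto simp: copies_def)
  then obtain \<phi> where "iso_map \<phi> G H" "graph H" by (auto simp: isomorphic_def subgraph_def)
  then show ?thesis using iso_eq_img[OF assms(2)] iso_inj by blast
qed

lemma copy_sub: "H \<in> copies G n E \<Longrightarrow> subgraph H ({1..n}, E)"
  by (simp add: copies_def)

lemma copy_graph: "H \<in> copies G n E \<Longrightarrow> graph H"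
  by (simp add: copies_def subgraph_def)

lemma copy_vert: "H \<in> copies G n E \<Longrightarrow> fst H \<subseteq> {1..n}"
  by (simp add: copies_def subgraph_def graph_le_def)

lemma copy_edges: "H \<in> copies G n E \<Longrightarrow> snd H \<subseteq> E"
  by (simp add: copies_def subgraph_def graph_le_def)

lemma copyI: "graph G \<Longrightarrow> inj_on \<phi> (fst G) \<Longrightarrow> \<phi> ` fst G \<subseteq> {1..n} \<Longrightarrow> (\<lambda>e. \<phi> ` e) ` snd G \<subseteq> E
   \<Longrightarrow> img \<phi> G \<in> copies G n E"
proof -
  assume a: "graph G" "inj_on \<phi> (fst G)" "\<phi> ` fst G \<subseteq> {1..n}" "(\<lambda>e. \<phi> ` e) ` snd G \<subseteq> E"
  have "graph (img \<phi> G)" using graph_img[OF a(1,2)] .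
  moreover have "graph_le (img \<phi> G) ({1..n}, E)" using a(3,4) by (simp add: graph_le_def)
  moreover have "isomorphic G (img \<phi> G)" using iso_img[OF a(1,2)] by (auto simp: isomorphic_def)
  ultimately show ?thesis by (simp add: copies_def subgraph_def)
qed

lemma copy_cards:
  assumes "H \<in> copies G n E" "graph G"
  shows "card (fst H) = card (fst G)" "card (snd H) = card (snd G)"
  using copyD[OF assms] card_img1 card_img2[OF assms(2)] by auto

lemma inter_graph: assumes "graph H1" "graph H2" shows "graph (graph_inter H1 H2)"
  by (rule subgraph_graph[of _ H1]) (use assms graph_edge_sub[of H1] graph_edge_sub[of H2] in \<open>auto simp: graph_inter_def graph_le_def\<close>)

lemma inter_le1: "graph_le (graph_inter H1 H2) H1" by (auto simp: graph_inter_def graph_le_def)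
lemma inter_le2: "graph_le (graph_inter H1 H2) H2" by (auto simp: graph_inter_def graph_le_def)
lemma inter_glb: "graph_le A H1 \<Longrightarrow> graph_le A H2 \<Longrightarrow> graph_le A (graph_inter H1 H2)"
  by (auto simp: graph_inter_def graph_le_def)

context Kset
begin

definition Dgood :: "nat \<Rightarrow> nat set set \<Rightarrow> bool" where
  "Dgood n E \<longleftrightarrow> (\<forall>V. V \<subseteq> {1..n} \<longrightarrow> card V \<le> 2 * card (fst K) \<longrightarrow>
      real (card {e \<in> E. e \<subseteq> V}) \<le> d * real (card V))"

lemma primal_graph: "primal G K \<Longrightarrow> graph G" by (simp add: primal_def subgraph_def)

lemma primal_vK: "primal G K \<Longrightarrow> card (fst G) \<le> card (fst K)"
  using finK1 by (auto simp: primal_def subgraph_def graph_le_def intro: card_mono)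

lemma overlap:
  assumes D: "Dgood n E" and G: "primal G K" and H1: "H1 \<in> copies G n E" and H2: "H2 \<in> copies G n E"
    and ne: "fst H1 \<inter> fst H2 \<noteq> {}"
  shows "d * real (card (fst (graph_inter H1 H2))) \<le> real (card (snd (graph_inter H1 H2)))"
proof -
  have gG: "graph G" using G primal_graph by blast
  have eG: "real (card (snd G)) = d * real (card (fst G))" using G primal_iff by blast
  have c1: "card (fst H1) = card (fst G)" "card (snd H1) = card (snd G)" using copy_cards[OF H1 gG] by auto
  have c2: "card (fst H2) = card (fst G)" "card (snd H2) = card (snd G)" using copy_cards[OF H2 gG] by auto
  have g1: "graph H1" "graph H2" using copy_graph[OF H1] copy_graph[OF H2] by auto
  have f1: "finite (fst H1)" "finite (fst H2)" using graph_fin1[OF g1(1)] graph_fin1[OF g1(2)] by auto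
  have f2: "finite (snd H1)" "finite (snd H2)" using graph_fin2[OF g1(1)] graph_fin2[OF g1(2)] by auto
  define V where "V = fst H1 \<union> fst H2"
  have Vn: "V \<subseteq> {1..n}" using copy_vert[OF H1] copy_vert[OF H2] by (auto simp: V_def)
  have cu: "card (fst H1) + card (fst H2) = card V + card (fst H1 \<inter> fst H2)"
    using card_Un_Int[OF f1] by (simp add: V_def)
  have cu2: "card (snd H1) + card (snd H2) = card (snd H1 \<union> snd H2) + card (snd H1 \<inter> snd H2)"
    using card_Un_Int[OF f2] by simp
  have "card V \<le> 2 * card (fst K)" using cu c1 c2 primal_vK[OF G] by linarith
  then have DV: "real (card {e \<in> E. e \<subseteq> V}) \<le> d * real (card V)" using D Vn by (simp add: Dgood_def)
  have "snd H1 \<union> snd H2 \<subseteq> {e \<in> E. e \<subseteq> V}"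
    using copy_edges[OF H1] copy_edges[OF H2] graph_edge_sub[OF g1(1)] graph_edge_sub[OF g1(2)]
    unfolding V_def by blast
  moreover have "finite {e \<in> E. e \<subseteq> V}"
  proof -
    have "finite V" using f1 by (simp add: V_def)
    then show ?thesis by (rule finite_subset[rotated, OF finite_Pow_iff[THEN iffD2]]) auto
  qed
  ultimately have "card (snd H1 \<union> snd H2) \<le> card {e \<in> E. e \<subseteq> V}" by (rule card_mono[rotated])
  then have "real (card (snd H1 \<union> snd H2)) \<le> d * real (card V)" using DV by linarith
  then have "2 * real (card (snd G)) - real (card (snd H1 \<inter> snd H2)) \<le> d * (2 * real (card (fst G)) - real (card (fst H1 \<inter> fst H2)))"
    using cu cu2 c1 c2 by (simp add: of_nat_add[symmetric]) (smt (verit) of_nat_add)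
  then show ?thesis using eG by (simp add: graph_inter_def algebra_simps)
qed

lemma pullback:
  assumes G: "primal G K" and inj: "inj_on \<phi> (fst G)" and gI: "graph I" and le: "graph_le I (img \<phi> G)"
    and ne: "fst I \<noteq> {}" and dI: "d * real (card (fst I)) \<le> real (card (snd I))"
  defines "\<psi> \<equiv> inv_into (fst G) \<phi>"
  shows "primal (img \<psi> I) K" "iso_map \<psi> I (img \<psi> I)" "img \<phi> (img \<psi> I) = I" "graph_le (img \<psi> I) G"
proof -
  have gG: "graph G" using G primal_graph by blast
  have ig: "inj_on \<psi> (\<phi> ` fst G)" unfolding \<psi>_def by (rule inj_on_inv_into) simp
  have igI: "inj_on \<psi> (fst I)" using ig le by (auto simp: graph_le_def intro: inj_on_subset)
  have "graph_le (img \<psi> I) (img \<psi> (img \<phi> G))" using le by (rule img_mono)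
  moreover have "img \<psi> (img \<phi> G) = G" unfolding \<psi>_def using gG inj by (intro img_id_on) auto
  ultimately show leG: "graph_le (img \<psi> I) G" by simp
  have sK: "subgraph (img \<psi> I) K"
    using leG G graph_img[OF gI igI] by (auto simp: primal_def subgraph_def intro: graph_le_trans)
  show "primal (img \<psi> I) K"
    by (rule primal_I[OF sK]) (use ne dI card_img1[OF igI] card_img2[OF gI igI] in auto)
  show "iso_map \<psi> I (img \<psi> I)" by (rule iso_img[OF gI igI])
  show "img \<phi> (img \<psi> I) = I"
  proof (rule img_id_on[OF gI])
    fix x assume "x \<in> fst I"
    then have "x \<in> \<phi> ` fst G" using le by (auto simp: graph_le_def)
    then show "\<phi> (\<psi> x) = x" unfolding \<psi>_def by (rule f_inv_into_f)
  qed
qed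

end

context Kset
begin

lemma ind_fst[simp]: "fst (ind S) = S" by (simp add: ind_def)

lemma ind_mono: "A \<subseteq> B \<Longrightarrow> graph_le (ind A) (ind B)"
  by (auto simp: ind_def graph_le_def)

lemma prop_i_det: assumes D: "Dgood n E" shows "prop_i K n E"
  unfolding prop_i_def
proof (intro allI impI ballI)
  fix G H1 H2 assume G: "primal G K" and H1: "H1 \<in> copies G n E" and H2: "H2 \<in> copies G n E"
  show "fst H1 \<inter> fst H2 = {} \<or> (\<exists>J. primal J K \<and> isomorphic (graph_inter H1 H2) J)"
  proof (cases "fst H1 \<inter> fst H2 = {}")
    case False
    have gG: "graph G" using G by (rule primal_graph)
    obtain \<phi> where inj: "inj_on \<phi> (fst G)" and h1: "H1 = img \<phi> G" using copyD[OF H1 gG] by blast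
    let ?I = "graph_inter H1 H2"
    have gI: "graph ?I" using inter_graph[OF copy_graph[OF H1] copy_graph[OF H2]] .
    have le: "graph_le ?I (img \<phi> G)" using inter_le1 h1 by metis
    have ne: "fst ?I \<noteq> {}" using False by (simp add: graph_inter_def)
    have dI: "d * real (card (fst ?I)) \<le> real (card (snd ?I))" by (rule overlap[OF D G H1 H2 False])
    note pb = pullback[OF G inj gI le ne dI]
    show ?thesis using pb(1,2) unfolding isomorphic_def by blast
  qed simp
qed

lemma prop_iv_det: assumes D: "Dgood n E" shows "prop_iv K n E"
  unfolding prop_iv_def
proof (intro ballI allI impI)
  fix v Gv x
  assume hyp: "primal Gv K \<and> v \<in> fst Gv \<and> \<not> (\<exists>J. primal J K \<and> v \<in> fst J \<and> graph_le J Gv \<and> J \<noteq> Gv)"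
  have G: "primal Gv K" and vG: "v \<in> fst Gv" using hyp by auto
  have gG: "graph Gv" using G by (rule primal_graph)
  let ?S = "{H \<in> copies Gv n E. \<exists>\<phi>. iso_map \<phi> Gv H \<and> \<phi> v = x}"
  have eq: "H1 = H2" if H1: "H1 \<in> ?S" and H2: "H2 \<in> ?S" for H1 H2
  proof -
    have c1: "H1 \<in> copies Gv n E" and c2: "H2 \<in> copies Gv n E" using H1 H2 by auto
    obtain \<phi>1 where i1: "iso_map \<phi>1 Gv H1" "\<phi>1 v = x" using H1 by auto
    obtain \<phi>2 where i2: "iso_map \<phi>2 Gv H2" "\<phi>2 v = x" using H2 by auto
    have h1: "H1 = img \<phi>1 Gv" by (rule iso_eq_img[OF gG copy_graph[OF c1] i1(1)])
    have h2: "H2 = img \<phi>2 Gv" by (rule iso_eq_img[OF gG copy_graph[OF c2] i2(1)])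
    have inj: "inj_on \<phi>1 (fst Gv)" using i1 iso_inj by blast
    have "x \<in> fst H1" using h1 i1(2) vG by (metis fst_img imageI)
    moreover have "x \<in> fst H2" using h2 i2(2) vG by (metis fst_img imageI)
    ultimately have x12: "x \<in> fst H1 \<inter> fst H2" by blast
    then have ne0: "fst H1 \<inter> fst H2 \<noteq> {}" by blast
    let ?I = "graph_inter H1 H2"
    have gI: "graph ?I" using inter_graph[OF copy_graph[OF c1] copy_graph[OF c2]] .
    have le: "graph_le ?I (img \<phi>1 Gv)" using inter_le1 h1 by metis
    have ne: "fst ?I \<noteq> {}" using ne0 by (simp add: graph_inter_def)
    have dI: "d * real (card (fst ?I)) \<le> real (card (snd ?I))" by (rule overlap[OF D G c1 c2 ne0])
    note pb = pullback[OF G inj gI le ne dI]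
    let ?J = "img (inv_into (fst Gv) \<phi>1) ?I"
    have "inv_into (fst Gv) \<phi>1 x = v" using i1(2) inj vG by (metis inv_into_f_f)
    moreover have "x \<in> fst ?I" using x12 by (simp add: graph_inter_def)
    ultimately have "v \<in> fst ?J" by force
    then have "?J = Gv" using hyp pb(1,4) by blast
    then have "?I = H1" using pb(3) h1 by simp
    then have "graph_le H1 H2" using inter_le2 by metis
    moreover have "card (fst H1) = card (fst H2)" "card (snd H1) = card (snd H2)"
      using copy_cards[OF c1 gG] copy_cards[OF c2 gG] by auto
    ultimately show "H1 = H2" using graph_le_card_eq copy_graph[OF c2] by blast
  qed
  show "card ?S \<le> 1"
  proof (cases "finite ?S")
    case True
    then show ?thesis using eq card_le_Suc0_iff_eq[OF True] by auto
  qed simp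
qed

lemma prop_ii_det: assumes D: "Dgood n E" shows "prop_ii K n E"
  unfolding prop_ii_def
proof (intro allI impI ballI)
  fix G0 G1 H0 H1 H2
  assume cov: "primal_cover K G0 G1" and H0: "H0 \<in> copies G0 n E"
    and H1: "H1 \<in> copies G1 n E" and H2: "H2 \<in> copies G1 n E"
    and hh: "graph_le H0 H1 \<and> graph_le H0 H2 \<and> H1 \<noteq> H2"
  have G0: "primal G0 K" and G1: "primal G1 K" and le01: "graph_le G0 G1" and ne01: "G0 \<noteq> G1"
    and nb: "\<not> (\<exists>F. primal F K \<and> graph_le G0 F \<and> F \<noteq> G0 \<and> graph_le F G1 \<and> F \<noteq> G1)"
    using cov by (auto simp: primal_cover_def)
  have gG0: "graph G0" using G0 by (rule primal_graph)
  have gG1: "graph G1" using G1 by (rule primal_graph)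
  show "(fst H1 - fst H0) \<inter> (fst H2 - fst H0) = {}"
  proof (rule ccontr)
    assume "(fst H1 - fst H0) \<inter> (fst H2 - fst H0) \<noteq> {}"
    then obtain y where y: "y \<in> fst H1" "y \<in> fst H2" "y \<notin> fst H0" by blast
    obtain \<phi>0 where inj0: "inj_on \<phi>0 (fst G0)" and h0: "H0 = img \<phi>0 G0" using copyD[OF H0 gG0] by blast
    obtain \<phi>1 where inj1: "inj_on \<phi>1 (fst G1)" and h1: "H1 = img \<phi>1 G1" using copyD[OF H1 gG1] by blast
    have ne0: "fst H1 \<inter> fst H2 \<noteq> {}" using y by blast
    let ?I = "graph_inter H1 H2"
    have gI: "graph ?I" using inter_graph[OF copy_graph[OF H1] copy_graph[OF H2]] .
    have le: "graph_le ?I (img \<phi>1 G1)" using inter_le1 h1 by metis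
    have ne: "fst ?I \<noteq> {}" using ne0 by (simp add: graph_inter_def)
    have dI: "d * real (card (fst ?I)) \<le> real (card (snd ?I))" by (rule overlap[OF D G1 H1 H2 ne0])
    define \<psi> where "\<psi> = inv_into (fst G1) \<phi>1"
    note pb = pullback[OF G1 inj1 gI le ne dI, folded \<psi>_def]
    define J where "J = img \<psi> ?I"
    have H0I: "graph_le H0 ?I" using hh by (intro inter_glb) auto
    define G0s where "G0s = img \<psi> H0"
    have gH0: "graph H0" using copy_graph[OF H0] .
    have ipsi: "inj_on \<psi> (fst H1)" unfolding \<psi>_def h1 by (simp add: inj_on_inv_into)
    have H0H1: "fst H0 \<subseteq> fst H1" using hh by (simp add: graph_le_def)
    have ipsi0: "inj_on \<psi> (fst H0)" using ipsi H0H1 by (rule inj_on_subset)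
    have G0sJ: "graph_le G0s J" unfolding G0s_def J_def by (rule img_mono[OF H0I])
    have JG1: "graph_le J G1" using pb(4) by (simp add: J_def)
    have PJ: "primal J K" using pb(1) by (simp add: J_def)
    have G0sK: "subgraph G0s K"
      using graph_img[OF gH0 ipsi0] G0sJ JG1 G1
      unfolding G0s_def by (auto simp: primal_def subgraph_def intro: graph_le_trans)
    have cG0: "card (fst H0) = card (fst G0)" "card (snd H0) = card (snd G0)" using copy_cards[OF H0 gG0] by auto
    have cG0s: "card (fst G0s) = card (fst G0)" "card (snd G0s) = card (snd G0)"
      unfolding G0s_def using card_img1[OF ipsi0] card_img2[OF gH0 ipsi0] cG0 by auto
    have eG0: "real (card (snd G0)) = d * real (card (fst G0))" and neG0: "fst G0 \<noteq> {}"
      using G0 primal_iff by auto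
    have PG0s: "primal G0s K"
    proof (rule primal_I[OF G0sK])
      show "fst G0s \<noteq> {}" using neG0 h0 by (simp add: G0s_def)
      show "d * real (card (fst G0s)) \<le> real (card (snd G0s))" using cG0s eG0 by simp
    qed
    define A where "A = fst G0"
    define As where "As = fst G0s"
    define Jv where "Jv = fst J"
    define B where "B = fst G1"
    have PA: "P A" using primal_P[OF G0] by (simp add: A_def)
    have PAs: "P As" using primal_P[OF PG0s] by (simp add: As_def)
    have PJv: "P Jv" using primal_P[OF PJ] by (simp add: Jv_def)
    have PB: "P B" using primal_P[OF G1] by (simp add: B_def)
    have G0ind: "G0 = ind A" using primal_ind[OF G0] by (simp add: A_def)
    have G1ind: "G1 = ind B" using primal_ind[OF G1] by (simp add: B_def)
    have G0sind: "G0s = ind As" using primal_ind[OF PG0s] by (simp add: As_def)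
    have Jind: "J = ind Jv" using primal_ind[OF PJ] by (simp add: Jv_def)
    have s1: "As \<subset> Jv"
    proof
      show "As \<subseteq> Jv" using G0sJ by (simp add: As_def Jv_def graph_le_def)
      have "\<psi> y \<in> Jv" using y by (auto simp: Jv_def J_def graph_inter_def)
      moreover have "\<psi> y \<notin> As"
      proof
        assume "\<psi> y \<in> As"
        then obtain z where z: "z \<in> fst H0" "\<psi> y = \<psi> z" by (auto simp: As_def G0s_def)
        then have "y = z" using ipsi y(1) H0H1 by (meson inj_onD subsetD)
        then show False using y z by simp
      qed
      ultimately show "As \<noteq> Jv" by blast
    qed
    have s2: "Jv \<subset> B"
    proof
      show "Jv \<subseteq> B" using JG1 by (simp add: Jv_def B_def graph_le_def)
      show "Jv \<noteq> B"
      proof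
        assume "Jv = B"
        then have "J = G1" using Jind G1ind by simp
        then have "?I = H1" using pb(3) h1 by (simp add: J_def)
        then have "graph_le H1 H2" using inter_le2 by metis
        moreover have "card (fst H1) = card (fst H2)" "card (snd H1) = card (snd H2)"
          using copy_cards[OF H1 gG1] copy_cards[OF H2 gG1] by auto
        ultimately have "H1 = H2" using graph_le_card_eq copy_graph[OF H2] by blast
        then show False using hh by simp
      qed
    qed
    have s3: "A \<subset> B"
    proof
      show "A \<subseteq> B" using le01 by (simp add: A_def B_def graph_le_def)
      show "A \<noteq> B" using G0ind G1ind ne01 by auto
    qed
    have nb': "False" if S: "P S" "A \<subset> S" "S \<subset> B" for S
    proof -
      have "primal (ind S) K" using S(1) by (rule P_primal)
      moreover have "graph_le G0 (ind S)" using G0ind ind_mono S(2) by auto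
      moreover have "ind S \<noteq> G0" using G0ind S(2) by (metis ind_fst less_irrefl)
      moreover have "graph_le (ind S) G1" using G1ind ind_mono S(3) by auto
      moreover have "ind S \<noteq> G1" using G1ind S(3) by (metis ind_fst less_irrefl)
      ultimately show False using nb by blast
    qed
    have r1: "card (c ` B) = Suc (card (c ` A))" by (rule rank_cover[OF PA PB s3 nb'])
    define \<chi> where "\<chi> = \<psi> \<circ> \<phi>0"
    have ichi: "inj_on \<chi> A" unfolding \<chi>_def A_def
      by (rule comp_inj_on[OF inj0]) (use ipsi0 h0 in simp)
    have imchi: "\<chi> ` A = As" by (simp add: \<chi>_def A_def As_def G0s_def h0 image_comp)
    have G0s_img: "G0s = img \<chi> G0" by (simp add: G0s_def h0 \<chi>_def img_comp)
    have isochi: "iso_map \<chi> G0 G0s" using iso_img[OF gG0] ichi G0s_img by (simp add: A_def)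
    have adj: "{a,b} \<in> snd K \<longleftrightarrow> {\<chi> a, \<chi> b} \<in> snd K" if ab: "a \<in> A" "b \<in> A" for a b
    proof -
      have "{a,b} \<in> snd K \<longleftrightarrow> {a,b} \<in> snd G0" using G0ind ab by (auto simp: ind_def)
      also have "\<dots> \<longleftrightarrow> {\<chi> a, \<chi> b} \<in> snd G0s" using isochi ab by (simp add: iso_map_def A_def)
      also have "\<dots> \<longleftrightarrow> {\<chi> a, \<chi> b} \<in> snd K"
      proof -
        have "\<chi> a \<in> As" "\<chi> b \<in> As" using imchi ab by auto
        then show ?thesis using G0sind by (auto simp: ind_def)
      qed
      finally show ?thesis .
    qed
    have r2: "card (c ` As) = card (c ` A)" by (rule rank_iso[OF PA PAs ichi imchi adj])
    have r3: "card (c ` As) < card (c ` Jv)" by (rule rank_strict[OF PAs PJv s1])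
    have r4: "card (c ` Jv) < card (c ` B)" by (rule rank_strict[OF PJv PB s2])
    show False using r1 r2 r3 r4 by linarith
  qed
qed

end

lemma copies_fin: "finite (copies G n E)"
proof -
  have "copies G n E \<subseteq> Pow {1..n} \<times> Pow (Pow {1..n})"
  proof
    fix H assume H: "H \<in> copies G n E"
    have "fst H \<subseteq> {1..n}" using copy_vert[OF H] .
    moreover have "snd H \<subseteq> Pow (fst H)" using graph_snd_Pow[OF copy_graph[OF H]] .
    ultimately show "H \<in> Pow {1..n} \<times> Pow (Pow {1..n})" by (cases H) auto
  qed
  then show ?thesis by (rule finite_subset) auto
qed

context Kset
begin

lemma primal_fin: "finite {J. primal J K}"
proof -
  have "{J. primal J K} \<subseteq> Pow (fst K) \<times> Pow (snd K)"
    by (auto simp: primal_def subgraph_def graph_le_def)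
  moreover have "finite (Pow (fst K) \<times> Pow (snd K))" using finK1 finK2 by simp
  ultimately show ?thesis by (rule finite_subset)
qed

lemma primal_le_K: "primal A K \<Longrightarrow> graph_le A K"
  by (simp add: primal_def subgraph_def)

lemma primal_eq_fst: "primal A K \<Longrightarrow> primal B K \<Longrightarrow> fst A = fst B \<Longrightarrow> A = B"
  using primal_ind by metis

lemma primal_lt_card:
  assumes "primal A K" "primal B K" "graph_le A B" "A \<noteq> B"
  shows "card (fst A) < card (fst B)"
proof -
  have "fst A \<subseteq> fst B" using assms(3) by (simp add: graph_le_def)
  moreover have "fst A \<noteq> fst B" using primal_eq_fst assms by blast
  moreover have "finite (fst B)" using graph_fin1[OF primal_graph[OF assms(2)]] .
  ultimately show ?thesis by (simp add: psubset_card_mono)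
qed

lemma primal_ne_K_card: "primal A K \<Longrightarrow> A \<noteq> K \<Longrightarrow> card (fst A) < card (fst K)"
  using primal_lt_card[OF _ primalK primal_le_K] by blast

lemma cover_ex:
  assumes A: "primal A K" "A \<noteq> K"
  shows "\<exists>F. primal_cover K A F"
proof -
  define X where "X = {F. primal F K \<and> graph_le A F \<and> F \<noteq> A}"
  have KX: "K \<in> X" using A primalK primal_le_K by (auto simp: X_def)
  define F0 where "F0 = (ARG_MIN (\<lambda>F. card (fst F)) F. F \<in> X)"
  have F0X: "F0 \<in> X" unfolding F0_def by (rule arg_min_nat_lemma[where P="\<lambda>F. F \<in> X", OF KX, THEN conjunct1])
  have F0min: "card (fst F0) \<le> card (fst F)" if "F \<in> X" for F
    unfolding F0_def by (rule arg_min_nat_le[where P="\<lambda>F. F \<in> X", OF that])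
  show ?thesis
  proof (intro exI)
    show "primal_cover K A F0" unfolding primal_cover_def
    proof (intro conjI notI)
      show "primal A K" using A by simp
      show "primal F0 K" "graph_le A F0" using F0X by (auto simp: X_def)
      show "A = F0 \<Longrightarrow> False" using F0X by (auto simp: X_def)
      assume "\<exists>F. primal F K \<and> graph_le A F \<and> F \<noteq> A \<and> graph_le F F0 \<and> F \<noteq> F0"
      then obtain F where F: "primal F K" "graph_le A F" "F \<noteq> A" "graph_le F F0" "F \<noteq> F0" by blast
      then have "F \<in> X" by (simp add: X_def)
      then have "card (fst F0) \<le> card (fst F)" by (rule F0min)
      moreover have "card (fst F) < card (fst F0)"
        using primal_lt_card[OF F(1) _ F(4,5)] F0X by (simp add: X_def)
      ultimately show False by simp
    qed
  qed
qed

definition cov :: "'a gr \<Rightarrow> 'a gr" where "cov A = (SOME F. primal_cover K A F)"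

lemma cov: "primal A K \<Longrightarrow> A \<noteq> K \<Longrightarrow> primal_cover K A (cov A)"
  unfolding cov_def using cover_ex by (rule someI_ex)

lemma cover_card: "primal_cover K A F \<Longrightarrow> card (fst A) < card (fst F)"
  unfolding primal_cover_def using primal_lt_card by blast

lemma pull_copy:
  assumes HA: "HA \<in> copies A n E" and A: "primal A K" and H: "H \<in> copies K n E" and le: "graph_le HA H"
  obtains \<phi> As where "inj_on \<phi> (fst K)" "H = img \<phi> K" "primal As K" "HA = img \<phi> As"
    "card (fst As) = card (fst A)" "graph_le As K" "HA \<in> copies As n E"
proof -
  obtain \<phi> where inj: "inj_on \<phi> (fst K)" and h: "H = img \<phi> K" using copyD[OF H gK] by blast
  define \<psi> where "\<psi> = inv_into (fst K) \<phi>"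
  define As where "As = img \<psi> HA"
  have gA: "graph A" using A by (rule primal_graph)
  have gHA: "graph HA" using copy_graph[OF HA] .
  have ipsi: "inj_on \<psi> (fst H)" unfolding \<psi>_def h by (simp add: inj_on_inv_into)
  have sub: "fst HA \<subseteq> fst H" using le by (simp add: graph_le_def)
  have ipsiA: "inj_on \<psi> (fst HA)" using ipsi sub by (rule inj_on_subset)
  have "graph_le As (img \<psi> H)" unfolding As_def by (rule img_mono[OF le])
  moreover have "img \<psi> H = K" unfolding h \<psi>_def using gK inj by (intro img_id_on) auto
  ultimately have AsK: "graph_le As K" by simp
  have gAs: "graph As" unfolding As_def by (rule graph_img[OF gHA ipsiA])
  have cA: "card (fst HA) = card (fst A)" "card (snd HA) = card (snd A)" using copy_cards[OF HA gA] by auto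
  have cAs: "card (fst As) = card (fst A)" "card (snd As) = card (snd A)"
    unfolding As_def using card_img1[OF ipsiA] card_img2[OF gHA ipsiA] cA by auto
  have eA: "real (card (snd A)) = d * real (card (fst A))" and neA: "fst A \<noteq> {}" using A primal_iff by auto
  have PAs: "primal As K"
  proof (rule primal_I)
    show "subgraph As K" using gAs AsK by (simp add: subgraph_def)
    show "fst As \<noteq> {}" using neA cAs by (metis card.empty card_0_eq graph_fin1[OF gA])
    show "d * real (card (fst As)) \<le> real (card (snd As))" using cAs eA by simp
  qed
  have HAeq: "HA = img \<phi> As" unfolding As_def
  proof (rule img_id_on[OF gHA, symmetric])
    fix x assume "x \<in> fst HA"
    then have "x \<in> \<phi> ` fst K" using sub h by auto
    then show "\<phi> (\<psi> x) = x" unfolding \<psi>_def by (rule f_inv_into_f)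
  qed
  have "HA \<in> copies As n E"
  proof -
    have "fst As \<subseteq> fst K" using AsK by (simp add: graph_le_def)
    then have "inj_on \<phi> (fst As)" using inj by (rule inj_on_subset[rotated])
    then have "iso_map \<phi> As HA" using iso_img[OF gAs] HAeq by simp
    then show ?thesis using copy_sub[OF HA] by (auto simp: copies_def isomorphic_def)
  qed
  then show ?thesis using that inj h PAs HAeq cAs AsK by blast
qed

lemma img_copy:
  assumes inj: "inj_on \<phi> (fst K)" and H: "img \<phi> K \<in> copies K n E" and F: "graph_le F K" "graph F"
  shows "img \<phi> F \<in> copies F n E"
proof -
  have iF: "inj_on \<phi> (fst F)" using inj F(1) by (auto simp: graph_le_def intro: inj_on_subset)
  have "graph_le (img \<phi> F) (img \<phi> K)" by (rule img_mono[OF F(1)])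
  then have "graph_le (img \<phi> F) ({1..n}, E)" using copy_sub[OF H] by (auto simp: subgraph_def intro: graph_le_trans)
  moreover have "graph (img \<phi> F)" by (rule graph_img[OF F(2) iF])
  moreover have "iso_map \<phi> F (img \<phi> F)" by (rule iso_img[OF F(2) iF])
  ultimately show ?thesis by (auto simp: copies_def subgraph_def isomorphic_def)
qed

lemma chain_bound:
  assumes iii: "prop_iii K B lam n E" and B: "B \<ge> 1" and lam: "lam \<ge> 0"
  defines "Q \<equiv> real (card {J. primal J K}) * B"
  shows "primal A K \<Longrightarrow> HA \<in> copies A n E \<Longrightarrow>
    real (card {H \<in> copies K n E. graph_le HA H}) \<le> Q ^ (card (fst K) - card (fst A)) * lam ^ (card (fst K) - card (fst A))"
proof (induction "card (fst K) - card (fst A)" arbitrary: A HA rule: less_induct)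
  case less
  note A = less.prems(1) and HA = less.prems(2)
  have Pn: "card {J. primal J K} \<ge> 1"
    using primalK primal_fin by (metis (mono_tags, lifting) One_nat_def Suc_leI card_gt_0_iff empty_iff mem_Collect_eq)
  have Q1: "Q \<ge> 1" unfolding Q_def using Pn B by (metis mult_mono' of_nat_1 of_nat_le_iff mult_1_left zero_le_one)
  show ?case
  proof (cases "A = K")
    case True
    have "{H \<in> copies K n E. graph_le HA H} \<subseteq> {HA}"
    proof
      fix H assume "H \<in> {H \<in> copies K n E. graph_le HA H}"
      then have H: "H \<in> copies K n E" "graph_le HA H" by auto
      have "card (fst HA) = card (fst H)" "card (snd HA) = card (snd H)"
        using copy_cards[OF H(1) gK] copy_cards[OF HA] True gK by auto
      then have "HA = H" using graph_le_card_eq[OF H(2) copy_graph[OF H(1)]] by blast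
      then show "H \<in> {HA}" by simp
    qed
    then have "card {H \<in> copies K n E. graph_le HA H} \<le> card {HA}" by (intro card_mono) auto
    then have "card {H \<in> copies K n E. graph_le HA H} \<le> 1" by simp
    then show ?thesis using True by simp
  next
    case False
    define f where "f = card (fst K) - card (fst A)"
    have fpos: "f > 0" using primal_ne_K_card[OF A False] by (simp add: f_def)
    define X where "X = {A'. primal A' K \<and> card (fst A') = card (fst A) \<and> HA \<in> copies A' n E}"
    define Y where "Y = (\<lambda>A'. {H' \<in> copies (cov A') n E. graph_le HA H'})"
    define Z where "Z = (\<lambda>H'. {H \<in> copies K n E. graph_le H' H})"
    have sub: "{H \<in> copies K n E. graph_le HA H} \<subseteq> (\<Union>A'\<in>X. \<Union>H'\<in>Y A'. Z H')"
    proof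
      fix H assume "H \<in> {H \<in> copies K n E. graph_le HA H}"
      then have H: "H \<in> copies K n E" "graph_le HA H" by auto
      obtain \<phi> As where o: "inj_on \<phi> (fst K)" "H = img \<phi> K" "primal As K" "HA = img \<phi> As"
        "card (fst As) = card (fst A)" "graph_le As K" "HA \<in> copies As n E"
        using pull_copy[OF HA A H(1,2)] by blast
      have AsX: "As \<in> X" using o by (simp add: X_def)
      have AsK: "As \<noteq> K" using o(5) primal_ne_K_card[OF A False] by auto
      have cv: "primal_cover K As (cov As)" by (rule cov[OF o(3) AsK])
      have cvK: "graph_le (cov As) K" "graph (cov As)" using cv primal_le_K primal_graph by (auto simp: primal_cover_def)
      have Hc: "img \<phi> K \<in> copies K n E" using H o by simp
      have Hp: "img \<phi> (cov As) \<in> copies (cov As) n E" by (rule img_copy[OF o(1) Hc cvK])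
      have "graph_le As (cov As)" using cv by (simp add: primal_cover_def)
      then have "graph_le HA (img \<phi> (cov As))" using o(4) img_mono by metis
      then have "img \<phi> (cov As) \<in> Y As" using Hp by (simp add: Y_def)
      moreover have "H \<in> Z (img \<phi> (cov As))" using H o(2) img_mono[OF cvK(1)] by (simp add: Z_def)
      ultimately show "H \<in> (\<Union>A'\<in>X. \<Union>H'\<in>Y A'. Z H')" using AsX by blast
    qed
    have finX: "finite X" using primal_fin by (rule finite_subset[rotated]) (auto simp: X_def)
    have finY: "finite (Y A')" for A' by (rule finite_subset[OF _ copies_fin[of "cov A'" n E]]) (auto simp: Y_def)
    have cX: "card X \<le> card {J. primal J K}" using primal_fin by (rule card_mono) (auto simp: X_def)
    have bnd: "real (card (\<Union>H'\<in>Y A'. Z H')) \<le> B * Q ^ (f - 1) * lam ^ f" if A'X: "A' \<in> X" for A'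
    proof -
      have A': "primal A' K" "card (fst A') = card (fst A)" "HA \<in> copies A' n E" using A'X by (auto simp: X_def)
      have A'K: "A' \<noteq> K" using A'(2) primal_ne_K_card[OF A False] by auto
      have cv: "primal_cover K A' (cov A')" by (rule cov[OF A'(1) A'K])
      have pc: "primal (cov A') K" using cv by (simp add: primal_cover_def)
      have lt: "card (fst A') < card (fst (cov A'))" by (rule cover_card[OF cv])
      have le: "card (fst (cov A')) \<le> card (fst K)" using primal_vK[OF pc] .
      define f' where "f' = card (fst K) - card (fst (cov A'))"
      define m where "m = card (fst (cov A')) - card (fst A')"
      have fm: "f' + m = f" using lt le A'(2) by (simp add: f'_def m_def f_def)
      have f'lt: "f' < f" using lt le A'(2) by (simp add: f'_def f_def)
      have IH: "real (card (Z H')) \<le> Q ^ f' * lam ^ f'" if "H' \<in> Y A'" for H'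
      proof -
        have "H' \<in> copies (cov A') n E" using that by (simp add: Y_def)
        then show ?thesis unfolding Z_def f'_def
          by (intro less.hyps[OF _ pc]) (use f'lt in \<open>simp_all add: f'_def f_def\<close>)
      qed
      have cY: "real (card (Y A')) \<le> B * lam ^ m"
        using iii cv A'(3) unfolding prop_iii_def Y_def m_def by blast
      have "real (card (\<Union>H'\<in>Y A'. Z H')) \<le> real (\<Sum>H'\<in>Y A'. card (Z H'))"
        using card_UN_le[OF finY] by (simp only: of_nat_le_iff)
      also have "\<dots> = (\<Sum>H'\<in>Y A'. real (card (Z H')))" by simp
      also have "\<dots> \<le> real (card (Y A')) * (Q ^ f' * lam ^ f')"
        using sum_bounded_above[of "Y A'" "\<lambda>H'. real (card (Z H'))" "Q ^ f' * lam ^ f'"] IH by simp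
      also have "\<dots> \<le> (B * lam ^ m) * (Q ^ f' * lam ^ f')"
        by (rule mult_right_mono[OF cY]) (use Q1 lam in simp)
      also have "\<dots> = B * Q ^ f' * lam ^ f" using fm by (simp add: power_add[symmetric] algebra_simps)
      also have "\<dots> \<le> B * Q ^ (f - 1) * lam ^ f"
      proof -
        have "Q ^ f' \<le> Q ^ (f - 1)" using Q1 f'lt by (intro power_increasing) auto
        then show ?thesis using B lam by (intro mult_right_mono mult_left_mono) auto
      qed
      finally show ?thesis .
    qed
    have "real (card {H \<in> copies K n E. graph_le HA H}) \<le> real (card (\<Union>A'\<in>X. \<Union>H'\<in>Y A'. Z H'))"
    proof -
      have "finite (\<Union>A'\<in>X. \<Union>H'\<in>Y A'. Z H')"
        using finX finY by (auto simp: Z_def intro!: finite_subset[OF _ copies_fin[of K n E]])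
      then show ?thesis using sub card_mono by (simp only: of_nat_le_iff) blast
    qed
    also have "\<dots> \<le> real (\<Sum>A'\<in>X. card (\<Union>H'\<in>Y A'. Z H'))"
      using card_UN_le[OF finX] by (simp only: of_nat_le_iff)
    also have "\<dots> = (\<Sum>A'\<in>X. real (card (\<Union>H'\<in>Y A'. Z H')))" by simp
    also have "\<dots> \<le> real (card X) * (B * Q ^ (f - 1) * lam ^ f)"
      using sum_bounded_above[of X "\<lambda>A'. real (card (\<Union>H'\<in>Y A'. Z H'))"] bnd by simp
    also have "\<dots> \<le> real (card {J. primal J K}) * (B * Q ^ (f - 1) * lam ^ f)"
      by (rule mult_right_mono) (use cX B lam Q1 in auto)
    also have "\<dots> = Q ^ f * lam ^ f"
      using fpos unfolding Q_def by (cases f) (auto simp: algebra_simps)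
    finally show ?thesis by (simp add: f_def)
  qed
qed

end

context Kset
begin

definition Gm :: "'a \<Rightarrow> 'a gr" where
  "Gm v = (ARG_MIN (\<lambda>J. card (fst J)) J. primal J K \<and> v \<in> fst J)"

lemma Gm: assumes "v \<in> fst K"
  shows "primal (Gm v) K" "v \<in> fst (Gm v)"
    "\<not> (\<exists>J. primal J K \<and> v \<in> fst J \<and> graph_le J (Gm v) \<and> J \<noteq> Gm v)"
proof -
  have K: "primal K K \<and> v \<in> fst K" using primalK assms by simp
  have m: "primal (Gm v) K \<and> v \<in> fst (Gm v)" unfolding Gm_def
    by (rule arg_min_nat_lemma[where P="\<lambda>J. primal J K \<and> v \<in> fst J", OF K, THEN conjunct1])
  then show "primal (Gm v) K" "v \<in> fst (Gm v)" by auto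
  show "\<not> (\<exists>J. primal J K \<and> v \<in> fst J \<and> graph_le J (Gm v) \<and> J \<noteq> Gm v)"
  proof
    assume "\<exists>J. primal J K \<and> v \<in> fst J \<and> graph_le J (Gm v) \<and> J \<noteq> Gm v"
    then obtain J where J: "primal J K" "v \<in> fst J" "graph_le J (Gm v)" "J \<noteq> Gm v" by blast
    have "card (fst (Gm v)) \<le> card (fst J)" unfolding Gm_def
      by (rule arg_min_nat_le[where P="\<lambda>J. primal J K \<and> v \<in> fst J"]) (use J in simp)
    moreover have "card (fst J) < card (fst (Gm v))" using primal_lt_card[OF J(1) _ J(3,4)] m by simp
    ultimately show False by simp
  qed
qed

lemma prop_v_det:
  assumes iii: "prop_iii K B lam n E" and iv: "prop_iv K n E" and B: "B \<ge> 1" and lam: "lam \<ge> 1"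
  defines "Q \<equiv> real (card {J. primal J K}) * B"
  shows "prop_v K (real (card (fst K)) * Q ^ card (fst K)) lam n E"
  unfolding prop_v_def
proof (intro allI impI ballI)
  fix Gmin x
  assume gm: "primal Gmin K \<and> (\<forall>J. primal J K \<longrightarrow> card (fst Gmin) \<le> card (fst J))"
  assume x: "x \<in> {1..n}"
  have Pn: "card {J. primal J K} \<ge> 1"
    using primalK primal_fin by (metis (mono_tags, lifting) One_nat_def Suc_leI card_gt_0_iff empty_iff mem_Collect_eq)
  have Q1: "Q \<ge> 1" unfolding Q_def using Pn B by (metis mult_mono' of_nat_1 of_nat_le_iff mult_1_left zero_le_one)
  define vm where "vm = card (fst Gmin)"
  define Zs where "Zs = (\<lambda>v. {H' \<in> copies (Gm v) n E. \<exists>\<phi>. iso_map \<phi> (Gm v) H' \<and> \<phi> v = x})"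
  define Z where "Z = (\<lambda>H'. {H \<in> copies K n E. graph_le H' H})"
  have sub: "{H \<in> copies K n E. x \<in> fst H} \<subseteq> (\<Union>v\<in>fst K. \<Union>H'\<in>Zs v. Z H')"
  proof
    fix H assume "H \<in> {H \<in> copies K n E. x \<in> fst H}"
    then have H: "H \<in> copies K n E" "x \<in> fst H" by auto
    obtain \<phi> where inj: "inj_on \<phi> (fst K)" and h: "H = img \<phi> K" using copyD[OF H(1) gK] by blast
    obtain v where v: "v \<in> fst K" "\<phi> v = x" using H(2) h by auto
    have G: "primal (Gm v) K" "v \<in> fst (Gm v)" using Gm[OF v(1)] by auto
    have Gle: "graph_le (Gm v) K" "graph (Gm v)" using G(1) primal_le_K primal_graph by auto
    have Hc: "img \<phi> K \<in> copies K n E" using H(1) h by simp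
    have cp: "img \<phi> (Gm v) \<in> copies (Gm v) n E" by (rule img_copy[OF inj Hc Gle])
    have iG: "inj_on \<phi> (fst (Gm v))" using inj Gle(1) by (auto simp: graph_le_def intro: inj_on_subset)
    have "iso_map \<phi> (Gm v) (img \<phi> (Gm v))" by (rule iso_img[OF Gle(2) iG])
    then have "img \<phi> (Gm v) \<in> Zs v" using cp v(2) by (auto simp: Zs_def)
    moreover have "H \<in> Z (img \<phi> (Gm v))" using H(1) h img_mono[OF Gle(1)] by (simp add: Z_def)
    ultimately show "H \<in> (\<Union>v\<in>fst K. \<Union>H'\<in>Zs v. Z H')" using v(1) by blast
  qed
  have finZs: "finite (Zs v)" for v by (rule finite_subset[OF _ copies_fin[of "Gm v" n E]]) (auto simp: Zs_def)
  have cZs: "card (Zs v) \<le> 1" if v: "v \<in> fst K" for v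
    using iv v Gm[OF v] x unfolding prop_iv_def Zs_def by blast
  have bZ: "real (card (Z H')) \<le> Q ^ card (fst K) * lam ^ (card (fst K) - vm)" if v: "v \<in> fst K" and H': "H' \<in> Zs v" for v H'
  proof -
    have G: "primal (Gm v) K" using Gm[OF v] by auto
    have cp: "H' \<in> copies (Gm v) n E" using H' by (simp add: Zs_def)
    have "real (card (Z H')) \<le> Q ^ (card (fst K) - card (fst (Gm v))) * lam ^ (card (fst K) - card (fst (Gm v)))"
      unfolding Z_def Q_def by (rule chain_bound[OF iii B _ G cp]) (use lam in simp)
    also have "\<dots> \<le> Q ^ card (fst K) * lam ^ (card (fst K) - vm)"
    proof (rule mult_mono)
      show "Q ^ (card (fst K) - card (fst (Gm v))) \<le> Q ^ card (fst K)" using Q1 by (intro power_increasing) auto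
      have "vm \<le> card (fst (Gm v))" using gm G unfolding vm_def by blast
      then show "lam ^ (card (fst K) - card (fst (Gm v))) \<le> lam ^ (card (fst K) - vm)"
        using lam by (intro power_increasing) auto
    qed (use Q1 lam in auto)
    finally show ?thesis .
  qed
  have bZs: "real (card (\<Union>H'\<in>Zs v. Z H')) \<le> Q ^ card (fst K) * lam ^ (card (fst K) - vm)" if v: "v \<in> fst K" for v
  proof -
    have "real (card (\<Union>H'\<in>Zs v. Z H')) \<le> real (\<Sum>H'\<in>Zs v. card (Z H'))"
      using card_UN_le[OF finZs] by (simp only: of_nat_le_iff)
    also have "\<dots> = (\<Sum>H'\<in>Zs v. real (card (Z H')))" by simp
    also have "\<dots> \<le> real (card (Zs v)) * (Q ^ card (fst K) * lam ^ (card (fst K) - vm))"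
      using sum_bounded_above[of "Zs v" "\<lambda>H'. real (card (Z H'))"] bZ[OF v] by simp
    also have "\<dots> \<le> 1 * (Q ^ card (fst K) * lam ^ (card (fst K) - vm))"
      by (rule mult_right_mono) (use cZs[OF v] Q1 lam in auto)
    finally show ?thesis by simp
  qed
  have "real (card {H \<in> copies K n E. x \<in> fst H}) \<le> real (card (\<Union>v\<in>fst K. \<Union>H'\<in>Zs v. Z H'))"
  proof -
    have "finite (\<Union>v\<in>fst K. \<Union>H'\<in>Zs v. Z H')"
      using finK1 finZs by (auto simp: Z_def intro!: finite_subset[OF _ copies_fin[of K n E]])
    then show ?thesis using sub card_mono by (simp only: of_nat_le_iff) blast
  qed
  also have "\<dots> \<le> real (\<Sum>v\<in>fst K. card (\<Union>H'\<in>Zs v. Z H'))"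
    using card_UN_le[OF finK1] by (simp only: of_nat_le_iff)
  also have "\<dots> = (\<Sum>v\<in>fst K. real (card (\<Union>H'\<in>Zs v. Z H')))" by simp
  also have "\<dots> \<le> real (card (fst K)) * (Q ^ card (fst K) * lam ^ (card (fst K) - vm))"
    using sum_bounded_above[of "fst K" "\<lambda>v. real (card (\<Union>H'\<in>Zs v. Z H'))"] bZs by simp
  finally show "real (card {H \<in> copies K n E. x \<in> fst H}) \<le> real (card (fst K)) * Q ^ card (fst K) * lam ^ (card (fst K) - card (fst Gmin))"
    by (simp add: vm_def mult.assoc)
qed

end

lemma all_pairs_fin: "finite (all_pairs n)"
proof -
  have "all_pairs n \<subseteq> Pow {1..n}" by (auto simp: all_pairs_def)
  then show ?thesis by (rule finite_subset) simp
qed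

lemma binom_Pow:
  fixes a b :: real
  assumes "finite X"
  shows "(\<Sum>F\<in>Pow X. a ^ card F * b ^ (card X - card F)) = (a + b) ^ card X"
  using assms
proof (induction X rule: finite_induct)
  case empty
  then show ?case by simp
next
  case (insert x X)
  have fP: "finite (Pow X)" using insert by simp
  have PI: "Pow (insert x X) = Pow X \<union> insert x ` Pow X" by (rule Pow_insert)
  have disj: "Pow X \<inter> insert x ` Pow X = {}" using insert by auto
  have inj: "inj_on (insert x) (Pow X)" using insert by (auto simp: inj_on_def)
  have cX: "card (insert x X) = Suc (card X)" using insert by simp
  have t1: "(\<Sum>F\<in>Pow X. a ^ card F * b ^ (card (insert x X) - card F)) =
        b * (\<Sum>F\<in>Pow X. a ^ card F * b ^ (card X - card F))"
  proof -
    have "\<And>F. F \<in> Pow X \<Longrightarrow> a ^ card F * b ^ (card (insert x X) - card F) = b * (a ^ card F * b ^ (card X - card F))"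
    proof -
      fix F assume F: "F \<in> Pow X"
      then have "card F \<le> card X" using insert by (simp add: card_mono)
      then have "card (insert x X) - card F = Suc (card X - card F)" using cX by simp
      then show "a ^ card F * b ^ (card (insert x X) - card F) = b * (a ^ card F * b ^ (card X - card F))" by simp
    qed
    then have "(\<Sum>F\<in>Pow X. a ^ card F * b ^ (card (insert x X) - card F)) = (\<Sum>F\<in>Pow X. b * (a ^ card F * b ^ (card X - card F)))"
      by (rule sum.cong[OF refl])
    then show ?thesis by (simp only: sum_distrib_left)
  qed
  have t2: "(\<Sum>F\<in>insert x ` Pow X. a ^ card F * b ^ (card (insert x X) - card F)) =
        a * (\<Sum>F\<in>Pow X. a ^ card F * b ^ (card X - card F))"
  proof -
    have "(\<Sum>F\<in>insert x ` Pow X. a ^ card F * b ^ (card (insert x X) - card F)) =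
        (\<Sum>F\<in>Pow X. a ^ card (insert x F) * b ^ (card (insert x X) - card (insert x F)))"
      by (rule sum.reindex[OF inj, unfolded comp_def])
    also have "\<dots> = (\<Sum>F\<in>Pow X. a * (a ^ card F * b ^ (card X - card F)))"
    proof (rule sum.cong[OF refl])
      fix F assume F: "F \<in> Pow X"
      then have fF: "finite F" "x \<notin> F" using insert finite_subset by auto
      then have "card (insert x F) = Suc (card F)" by simp
      then show "a ^ card (insert x F) * b ^ (card (insert x X) - card (insert x F)) = a * (a ^ card F * b ^ (card X - card F))"
        using cX by simp
    qed
    finally show ?thesis by (simp only: sum_distrib_left)
  qed
  have "(\<Sum>F\<in>Pow (insert x X). a ^ card F * b ^ (card (insert x X) - card F)) =
     (\<Sum>F\<in>Pow X. a ^ card F * b ^ (card (insert x X) - card F)) + (\<Sum>F\<in>insert x ` Pow X. a ^ card F * b ^ (card (insert x X) - card F))"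
    unfolding PI by (rule sum.union_disjoint) (use fP disj in auto)
  also have "\<dots> = (a + b) * (a + b) ^ card X" using t1 t2 insert.IH by (simp add: algebra_simps)
  finally show ?case using cX by simp
qed

definition wt :: "nat \<Rightarrow> real \<Rightarrow> nat set set \<Rightarrow> real" where
  "wt n p E = p ^ card E * (1 - p) ^ (card (all_pairs n) - card E)"

lemma gnp_wt: "gnp_prob n p P = (\<Sum>E\<in>{E. E \<subseteq> all_pairs n \<and> P E}. wt n p E)"
  by (simp add: gnp_prob_def wt_def)

lemma wt_nonneg: "0 \<le> p \<Longrightarrow> p \<le> 1 \<Longrightarrow> 0 \<le> wt n p E"
  by (simp add: wt_def)

lemma gnp_True: "gnp_prob n p (\<lambda>E. True) = 1"
proof -
  have "{E. E \<subseteq> all_pairs n \<and> True} = Pow (all_pairs n)" by auto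
  then show ?thesis unfolding gnp_prob_def using binom_Pow[OF all_pairs_fin, of p "1 - p"] by simp
qed

lemma gnp_compl: "gnp_prob n p P = 1 - gnp_prob n p (\<lambda>E. \<not> P E)"
proof -
  have "gnp_prob n p (\<lambda>E. True) = gnp_prob n p P + gnp_prob n p (\<lambda>E. \<not> P E)"
    unfolding gnp_wt
    by (subst sum.union_disjoint[symmetric]) (auto intro: finite_subset[OF _ finite_Pow_iff[THEN iffD2, OF all_pairs_fin]] intro!: sum.cong)
  then show ?thesis using gnp_True by simp
qed

lemma gnp_mono:
  assumes "0 \<le> p" "p \<le> 1" "\<And>E. E \<subseteq> all_pairs n \<Longrightarrow> P E \<Longrightarrow> Q E"
  shows "gnp_prob n p P \<le> gnp_prob n p Q"
  unfolding gnp_wt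
  by (rule sum_mono2) (use assms wt_nonneg in \<open>auto intro: finite_subset[OF _ finite_Pow_iff[THEN iffD2, OF all_pairs_fin]]\<close>)

lemma gnp_nonneg: "0 \<le> p \<Longrightarrow> p \<le> 1 \<Longrightarrow> 0 \<le> gnp_prob n p P"
  unfolding gnp_wt by (rule sum_nonneg) (use wt_nonneg in auto)

lemma gnp_le1: "0 \<le> p \<Longrightarrow> p \<le> 1 \<Longrightarrow> gnp_prob n p P \<le> 1"
  using gnp_compl[of n p P] gnp_nonneg[of p n "\<lambda>E. \<not> P E"] by simp

lemma gnp_union:
  assumes p: "0 \<le> p" "p \<le> 1" and I: "finite I"
  shows "gnp_prob n p (\<lambda>E. \<exists>i\<in>I. Q i E) \<le> (\<Sum>i\<in>I. gnp_prob n p (Q i))"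
proof -
  let ?U = "{E. E \<subseteq> all_pairs n \<and> (\<exists>i\<in>I. Q i E)}"
  have fU: "finite ?U" by (rule finite_subset[OF _ finite_Pow_iff[THEN iffD2, OF all_pairs_fin]]) auto
  have "(\<Sum>E\<in>?U. wt n p E) \<le> (\<Sum>E\<in>?U. \<Sum>i\<in>I. if Q i E then wt n p E else 0)"
  proof (rule sum_mono)
    fix E assume "E \<in> ?U"
    then obtain i where i: "i \<in> I" "Q i E" by auto
    have "wt n p E = (if Q i E then wt n p E else 0)" using i by simp
    also have "\<dots> \<le> (\<Sum>i\<in>I. if Q i E then wt n p E else 0)"
      by (rule member_le_sum[OF i(1)]) (use wt_nonneg p I in auto)
    finally show "wt n p E \<le> (\<Sum>i\<in>I. if Q i E then wt n p E else 0)" .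
  qed
  also have "\<dots> = (\<Sum>i\<in>I. \<Sum>E\<in>?U. if Q i E then wt n p E else 0)" by (rule sum.swap)
  also have "\<dots> = (\<Sum>i\<in>I. gnp_prob n p (Q i))"
  proof (rule sum.cong[OF refl])
    fix i assume i: "i \<in> I"
    have "(\<Sum>E\<in>?U. if Q i E then wt n p E else 0) = (\<Sum>E\<in>{E \<in> ?U. Q i E}. wt n p E)"
      by (rule sum.inter_filter[OF fU, symmetric])
    also have "{E \<in> ?U. Q i E} = {E. E \<subseteq> all_pairs n \<and> Q i E}" using i by auto
    finally show "(\<Sum>E\<in>?U. if Q i E then wt n p E else 0) = gnp_prob n p (Q i)" by (simp add: gnp_wt)
  qed
  finally show ?thesis by (simp add: gnp_wt)
qed

lemma gnp_contains:
  assumes S: "S \<subseteq> all_pairs n"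
  shows "gnp_prob n p (\<lambda>E. S \<subseteq> E) = p ^ card S"
proof -
  let ?A = "all_pairs n"
  have fA: "finite ?A" by (rule all_pairs_fin)
  have fS: "finite S" using S fA finite_subset by blast
  have inj: "inj_on (\<lambda>F. F \<union> S) (Pow (?A - S))" by (auto simp: inj_on_def)
  have im: "(\<lambda>F. F \<union> S) ` Pow (?A - S) = {E. E \<subseteq> ?A \<and> S \<subseteq> E}"
  proof
    show "(\<lambda>F. F \<union> S) ` Pow (?A - S) \<subseteq> {E. E \<subseteq> ?A \<and> S \<subseteq> E}" using S by auto
    show "{E. E \<subseteq> ?A \<and> S \<subseteq> E} \<subseteq> (\<lambda>F. F \<union> S) ` Pow (?A - S)"
    proof
      fix E assume "E \<in> {E. E \<subseteq> ?A \<and> S \<subseteq> E}"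
      then have "E = (E - S) \<union> S" "E - S \<in> Pow (?A - S)" by auto
      then show "E \<in> (\<lambda>F. F \<union> S) ` Pow (?A - S)" by blast
    qed
  qed
  have cAS: "card (?A - S) = card ?A - card S" using S fS by (simp add: card_Diff_subset)
  have "gnp_prob n p (\<lambda>E. S \<subseteq> E) = (\<Sum>E\<in>{E. E \<subseteq> ?A \<and> S \<subseteq> E}. wt n p E)" by (simp add: gnp_wt)
  also have "\<dots> = (\<Sum>F\<in>Pow (?A - S). wt n p (F \<union> S))"
    unfolding im[symmetric] by (rule sum.reindex[OF inj, unfolded comp_def])
  also have "\<dots> = (\<Sum>F\<in>Pow (?A - S). p ^ card S * (p ^ card F * (1 - p) ^ (card (?A - S) - card F)))"
  proof (rule sum.cong[OF refl])
    fix F assume F: "F \<in> Pow (?A - S)"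
    have fF: "finite F" using F fA finite_subset by auto
    have cF: "card (F \<union> S) = card F + card S" using F fF fS by (subst card_Un_disjoint) auto
    have "card F \<le> card (?A - S)" using F fA by (simp add: card_mono)
    then have "card ?A - card (F \<union> S) = card (?A - S) - card F" using cF cAS by simp
    then show "wt n p (F \<union> S) = p ^ card S * (p ^ card F * (1 - p) ^ (card (?A - S) - card F))"
      unfolding wt_def using cF by (simp add: power_add)
  qed
  also have "\<dots> = p ^ card S" using binom_Pow[of "?A - S" p "1 - p"] fA by (simp add: sum_distrib_left[symmetric])
  finally show ?thesis .
qed

lemma gnp_union_contains:
  assumes p: "0 \<le> p" "p \<le> 1" and I: "finite I" and S: "\<And>i. i \<in> I \<Longrightarrow> S i \<subseteq> all_pairs n"
  shows "gnp_prob n p (\<lambda>E. \<exists>i\<in>I. S i \<subseteq> E) \<le> (\<Sum>i\<in>I. p ^ card (S i))"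
proof -
  have "gnp_prob n p (\<lambda>E. \<exists>i\<in>I. S i \<subseteq> E) \<le> (\<Sum>i\<in>I. gnp_prob n p (\<lambda>E. S i \<subseteq> E))"
    by (rule gnp_union[OF p I])
  also have "\<dots> = (\<Sum>i\<in>I. p ^ card (S i))" using gnp_contains S by simp
  finally show ?thesis .
qed


lemma choose_le_pow: "n choose k \<le> n ^ k"
proof -
  have "(n choose k) * 1 \<le> (n choose k) * fact k" by (intro mult_le_mono2) (simp add: fact_ge_1)
  then show ?thesis using binomial_fact_pow[of n k] by linarith
qed

lemma fin_nat_sub: "V \<subseteq> {a..b::nat} \<Longrightarrow> finite V"
  using finite_subset by blast

lemma ksub_card:
  assumes "finite X" "card X \<le> N"
  shows "real (card {T. T \<subseteq> X \<and> card T = k \<and> Q T}) \<le> real N ^ k / fact k"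
proof -
  have "card {T. T \<subseteq> X \<and> card T = k \<and> Q T} \<le> card {T. T \<subseteq> X \<and> card T = k}"
    by (rule card_mono) (use assms(1) in auto)
  also have "\<dots> = card X choose k" by (rule n_subsets[OF assms(1)])
  finally have 1: "real (card {T. T \<subseteq> X \<and> card T = k \<and> Q T}) \<le> real (card X choose k)" by simp
  have "real (card X choose k) * fact k \<le> real (card X ^ k)"
    using binomial_fact_pow[of "card X" k] by (metis of_nat_fact of_nat_le_iff of_nat_mult)
  also have "\<dots> \<le> real N ^ k" using assms(2) by (simp add: power_mono)
  finally have "real (card X choose k) \<le> real N ^ k / fact k" by (simp add: field_simps)
  with 1 show ?thesis by linarith
qed

lemma copies_all_count:
  assumes "graph G"
  shows "card (copies G n (all_pairs n)) \<le> n ^ card (fst G) * 2 ^ (2 ^ card (fst G))"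
proof -
  let ?v = "card (fst G)"
  let ?Vs = "{V. V \<subseteq> {1..n} \<and> card V = ?v}"
  have sub: "copies G n (all_pairs n) \<subseteq> Sigma ?Vs (\<lambda>V. Pow (Pow V))"
  proof
    fix H assume H: "H \<in> copies G n (all_pairs n)"
    have "card (fst H) = ?v" using copy_cards[OF H assms] by simp
    moreover have "fst H \<subseteq> {1..n}" by (rule copy_vert[OF H])
    moreover have "snd H \<subseteq> Pow (fst H)" by (rule graph_snd_Pow[OF copy_graph[OF H]])
    ultimately show "H \<in> Sigma ?Vs (\<lambda>V. Pow (Pow V))" by (cases H) auto
  qed
  have fVs: "finite ?Vs" by (rule finite_subset[of _ "Pow {1..n}"]) auto
  have fin: "\<forall>V\<in>?Vs. finite (Pow (Pow V))" using fin_nat_sub by auto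
  have "card (copies G n (all_pairs n)) \<le> card (Sigma ?Vs (\<lambda>V. Pow (Pow V)))"
    by (rule card_mono[OF _ sub]) (use fVs fin in auto)
  also have "\<dots> = (\<Sum>V\<in>?Vs. card (Pow (Pow V)))" using fVs fin by simp
  also have "\<dots> = (\<Sum>V\<in>?Vs. 2 ^ (2 ^ ?v))"
  proof (rule sum.cong[OF refl])
    fix V assume V: "V \<in> ?Vs"
    then have "finite V" using fin_nat_sub by auto
    then show "card (Pow (Pow V)) = 2 ^ (2 ^ ?v)" using V by (simp add: card_Pow)
  qed
  also have "\<dots> = (n choose ?v) * 2 ^ (2 ^ ?v)" using n_subsets[of "{1..n}" ?v] by simp
  also have "\<dots> \<le> n ^ ?v * 2 ^ (2 ^ ?v)" by (simp add: choose_le_pow)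
  finally show ?thesis .
qed

lemma ext_count:
  assumes gG1: "graph G1" and fH0: "finite (fst H0)" and le: "card (fst H0) \<le> card (fst G1)"
  shows "card {H \<in> copies G1 n (all_pairs n). graph_le H0 H} \<le> n ^ (card (fst G1) - card (fst H0)) * 2 ^ (2 ^ card (fst G1))"
proof -
  let ?v1 = "card (fst G1)" and ?m = "card (fst G1) - card (fst H0)"
  let ?Ws = "{W. W \<subseteq> {1..n} \<and> card W = ?m}"
  let ?f = "\<lambda>(W, S). (fst H0 \<union> W, S)"
  have sub: "{H \<in> copies G1 n (all_pairs n). graph_le H0 H} \<subseteq> ?f ` Sigma ?Ws (\<lambda>W. Pow (Pow (fst H0 \<union> W)))"
  proof
    fix H assume "H \<in> {H \<in> copies G1 n (all_pairs n). graph_le H0 H}"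
    then have H: "H \<in> copies G1 n (all_pairs n)" "graph_le H0 H" by auto
    have cH: "card (fst H) = ?v1" using copy_cards[OF H(1) gG1] by simp
    have sH: "fst H0 \<subseteq> fst H" using H(2) by (simp add: graph_le_def)
    have fH: "finite (fst H)" using graph_fin1[OF copy_graph[OF H(1)]] .
    define W where "W = fst H - fst H0"
    have "card W = ?m" unfolding W_def using cH sH fH by (simp add: card_Diff_subset[OF finite_subset[OF sH fH] sH])
    moreover have "W \<subseteq> {1..n}" using copy_vert[OF H(1)] by (auto simp: W_def)
    moreover have "fst H0 \<union> W = fst H" using sH by (auto simp: W_def)
    moreover have "snd H \<subseteq> Pow (fst H)" by (rule graph_snd_Pow[OF copy_graph[OF H(1)]])
    ultimately have "(W, snd H) \<in> Sigma ?Ws (\<lambda>W. Pow (Pow (fst H0 \<union> W)))" "H = ?f (W, snd H)" by auto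
    then show "H \<in> ?f ` Sigma ?Ws (\<lambda>W. Pow (Pow (fst H0 \<union> W)))" by blast
  qed
  have fWs: "finite ?Ws" by (rule finite_subset[of _ "Pow {1..n}"]) auto
  have fin: "\<forall>W\<in>?Ws. finite (Pow (Pow (fst H0 \<union> W)))"
  proof
    fix W assume "W \<in> ?Ws"
    then have "W \<subseteq> {1..n}" by simp
    then have "finite W" by (rule fin_nat_sub)
    then show "finite (Pow (Pow (fst H0 \<union> W)))" using fH0 by simp
  qed
  have finS: "finite (Sigma ?Ws (\<lambda>W. Pow (Pow (fst H0 \<union> W))))"
    by (rule finite_SigmaI[OF fWs]) (use fin in blast)
  have "card {H \<in> copies G1 n (all_pairs n). graph_le H0 H} \<le> card (?f ` Sigma ?Ws (\<lambda>W. Pow (Pow (fst H0 \<union> W))))"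
    by (rule card_mono[OF finite_imageI[OF finS] sub])
  also have "\<dots> \<le> card (Sigma ?Ws (\<lambda>W. Pow (Pow (fst H0 \<union> W))))" by (rule card_image_le[OF finS])
  also have "\<dots> = (\<Sum>W\<in>?Ws. card (Pow (Pow (fst H0 \<union> W))))" by (rule card_SigmaI[OF fWs fin])
  also have "\<dots> \<le> (\<Sum>W\<in>?Ws. 2 ^ (2 ^ ?v1))"
  proof (rule sum_mono)
    fix W assume W: "W \<in> ?Ws"
    then have fW: "finite W" using fin_nat_sub[of W 1 n] by simp
    have "card (fst H0 \<union> W) \<le> card (fst H0) + card W" by (rule card_Un_le)
    also have "\<dots> = ?v1" using W le by simp
    finally have c: "card (fst H0 \<union> W) \<le> ?v1" .
    have "card (Pow (Pow (fst H0 \<union> W))) = 2 ^ (2 ^ card (fst H0 \<union> W))" using fH0 fW by (simp add: card_Pow)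
    also have "\<dots> \<le> 2 ^ (2 ^ ?v1)" using c by (intro power_increasing) auto
    finally show "card (Pow (Pow (fst H0 \<union> W))) \<le> 2 ^ (2 ^ ?v1)" .
  qed
  also have "\<dots> = (n choose ?m) * 2 ^ (2 ^ ?v1)" using n_subsets[of "{1..n}" ?m] by simp
  also have "\<dots> \<le> n ^ ?m * 2 ^ (2 ^ ?v1)" by (simp add: choose_le_pow)
  finally show ?thesis .
qed

lemma fact_bound: "real k ^ k / fact k \<le> exp (real k)"
proof -
  have "(\<lambda>n. real k ^ n /\<^sub>R fact n) sums exp (real k)" by (rule exp_converges)
  then have s: "summable (\<lambda>n. real k ^ n / fact n)" and e: "exp (real k) = (\<Sum>n. real k ^ n / fact n)"
    by (auto simp: sums_iff divide_inverse mult.commute)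
  have "(\<Sum>n\<in>{k}. real k ^ n / fact n) \<le> (\<Sum>n. real k ^ n / fact n)"
    by (rule sum_le_suminf[OF s]) auto
  then show ?thesis using e by simp
qed


definition disjo :: "nat gr \<Rightarrow> nat gr set \<Rightarrow> bool" where
  "disjo H0 T \<longleftrightarrow> (\<forall>H\<in>T. \<forall>H'\<in>T. H \<noteq> H' \<longrightarrow> (fst H - fst H0) \<inter> (fst H' - fst H0) = {})"

definition BadT :: "nat \<Rightarrow> nat \<Rightarrow> 'v gr \<Rightarrow> 'v gr \<Rightarrow> nat set set \<Rightarrow> bool" where
  "BadT n k G0 G1 E \<longleftrightarrow> (\<exists>H0\<in>copies G0 n (all_pairs n). \<exists>T.
     T \<subseteq> {H \<in> copies G1 n (all_pairs n). graph_le H0 H} \<and> card T = k \<and> disjo H0 T \<and>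
     snd H0 \<union> \<Union>(snd ` T) \<subseteq> E)"

context Kset
begin

lemma edges_in:
  assumes cov: "primal_cover K G0 G1" and H0: "H0 \<in> copies G0 n X" and H: "H \<in> copies G1 n Y"
    and le: "graph_le H0 H"
  shows "{e \<in> snd H. e \<subseteq> fst H0} = snd H0"
proof -
  have G0: "primal G0 K" and G1: "primal G1 K" using cov by (auto simp: primal_cover_def)
  have gG1: "graph G1" and gG0: "graph G0" using G0 G1 primal_graph by auto
  obtain \<phi> where inj: "inj_on \<phi> (fst G1)" and h: "H = img \<phi> G1" using copyD[OF H gG1] by blast
  have "sparse d G1" using sparse_sub[OF sparseK] G1 by (simp add: primal_def)
  then have sH: "sparse d H" using sparse_img[OF gG1 inj] h by simp
  let ?S = "(fst H0, {e \<in> snd H. e \<subseteq> fst H0})"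
  have gH: "graph H" using copy_graph[OF H] .
  have "graph ?S" by (rule subgraph_graph[OF _ gH]) (use le in \<open>auto simp: graph_le_def\<close>)
  moreover have "graph_le ?S H" using le by (auto simp: graph_le_def)
  ultimately have "real (card {e \<in> snd H. e \<subseteq> fst H0}) \<le> d * real (card (fst H0))"
    using sH unfolding sparse_def subgraph_def by (metis fst_conv snd_conv)
  moreover have "card (fst H0) = card (fst G0)" "card (snd H0) = card (snd G0)" using copy_cards[OF H0 gG0] by auto
  moreover have "real (card (snd G0)) = d * real (card (fst G0))" using G0 primal_iff by blast
  ultimately have c: "card {e \<in> snd H. e \<subseteq> fst H0} \<le> card (snd H0)" by simp
  have s: "snd H0 \<subseteq> {e \<in> snd H. e \<subseteq> fst H0}"
    using le graph_edge_sub[OF copy_graph[OF H0]] by (auto simp: graph_le_def)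
  have f: "finite {e \<in> snd H. e \<subseteq> fst H0}" using graph_fin2[OF gH] by simp
  show ?thesis using card_subset_eq[OF f s] c s by (metis card_mono f order_antisym)
qed

lemma union_card:
  assumes cov: "primal_cover K G0 G1" and H0: "H0 \<in> copies G0 n (all_pairs n)"
    and T: "T \<subseteq> {H \<in> copies G1 n (all_pairs n). graph_le H0 H}" and k: "card T = k" and dj: "disjo H0 T"
  shows "card (snd G0) + k * (card (snd G1) - card (snd G0)) \<le> card (snd H0 \<union> \<Union>(snd ` T))"
proof -
  have G0: "primal G0 K" and G1: "primal G1 K" using cov by (auto simp: primal_cover_def)
  have gG1: "graph G1" and gG0: "graph G0" using G0 G1 primal_graph by auto
  have finT: "finite T" using T copies_fin finite_subset by (metis (no_types, lifting) mem_Collect_eq subsetI subset_iff)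
  have Tc: "H \<in> copies G1 n (all_pairs n)" "graph_le H0 H" if "H \<in> T" for H using T that by auto
  have eq: "snd H0 \<union> \<Union>(snd ` T) = snd H0 \<union> (\<Union>H\<in>T. snd H - snd H0)" by auto
  have disj: "(snd H - snd H0) \<inter> (snd H' - snd H0) = {}" if "H \<in> T" "H' \<in> T" "H \<noteq> H'" for H H'
  proof (rule ccontr)
    assume "(snd H - snd H0) \<inter> (snd H' - snd H0) \<noteq> {}"
    then obtain e where e: "e \<in> snd H" "e \<in> snd H'" "e \<notin> snd H0" by blast
    have "e \<subseteq> fst H" "e \<subseteq> fst H'"
      using graph_edge_sub[OF copy_graph[OF Tc(1)[OF that(1)]] e(1)]
        graph_edge_sub[OF copy_graph[OF Tc(1)[OF that(2)]] e(2)] by auto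
    moreover have "(fst H - fst H0) \<inter> (fst H' - fst H0) = {}" using dj that by (simp add: disjo_def)
    ultimately have "e \<subseteq> fst H0" by blast
    then have "e \<in> snd H0" using edges_in[OF cov H0 Tc[OF that(1)]] e(1) by blast
    then show False using e by simp
  qed
  have cH: "card (snd H - snd H0) = card (snd G1) - card (snd G0)" if "H \<in> T" for H
  proof -
    have "snd H0 \<subseteq> snd H" using Tc(2)[OF that] by (simp add: graph_le_def)
    moreover have "finite (snd H)" using graph_fin2[OF copy_graph[OF Tc(1)[OF that]]] .
    ultimately have "card (snd H - snd H0) = card (snd H) - card (snd H0)" by (simp add: card_Diff_subset finite_subset)
    then show ?thesis using copy_cards[OF Tc(1)[OF that] gG1] copy_cards[OF H0 gG0] by simp
  qed
  have finU: "\<forall>H\<in>T. finite (snd H - snd H0)" using Tc graph_fin2 copy_graph by blast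
  have "card (\<Union>H\<in>T. snd H - snd H0) = (\<Sum>H\<in>T. card (snd H - snd H0))"
    by (rule card_UN_disjoint[OF finT finU]) (use disj in blast)
  also have "\<dots> = k * (card (snd G1) - card (snd G0))" using cH k by simp
  finally have c1: "card (\<Union>H\<in>T. snd H - snd H0) = k * (card (snd G1) - card (snd G0))" .
  have "card (snd H0 \<union> (\<Union>H\<in>T. snd H - snd H0)) = card (snd H0) + card (\<Union>H\<in>T. snd H - snd H0)"
  proof (rule card_Un_disjoint)
    show "finite (snd H0)" using graph_fin2[OF copy_graph[OF H0]] .
    show "finite (\<Union>H\<in>T. snd H - snd H0)"
    proof (rule finite_UN_I[OF finT])
      fix H assume "H \<in> T" then show "finite (snd H - snd H0)" using finU by blast
    qed
    show "snd H0 \<inter> (\<Union>H\<in>T. snd H - snd H0) = {}" by blast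
  qed
  moreover have "card (snd H0 \<union> \<Union>(snd ` T)) = card (snd H0 \<union> (\<Union>H\<in>T. snd H - snd H0))"
    by (simp only: eq)
  ultimately have "card (snd H0 \<union> \<Union>(snd ` T)) = card (snd H0) + k * (card (snd G1) - card (snd G0))"
    using c1 by linarith
  then show ?thesis using copy_cards[OF H0 gG0] by simp
qed

lemma bad_prob:
  assumes cov: "primal_cover K G0 G1" and p: "0 \<le> p" "p \<le> 1"
  shows "gnp_prob n p (BadT n k G0 G1) \<le>
    real (n ^ card (fst G0) * 2 ^ 2 ^ card (fst G0)) * real (n ^ (card (fst G1) - card (fst G0)) * 2 ^ 2 ^ card (fst G1)) ^ k / fact k
     * p ^ (card (snd G0) + k * (card (snd G1) - card (snd G0)))"
proof -
  have G0: "primal G0 K" and G1: "primal G1 K" using cov by (auto simp: primal_cover_def)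
  have gG1: "graph G1" and gG0: "graph G0" using G0 G1 primal_graph by auto
  let ?C0 = "copies G0 n (all_pairs n)"
  let ?X = "\<lambda>H0. {H \<in> copies G1 n (all_pairs n). graph_le H0 H}"
  let ?Ts = "\<lambda>H0. {T. T \<subseteq> ?X H0 \<and> card T = k \<and> disjo H0 T}"
  let ?I = "Sigma ?C0 ?Ts"
  let ?S = "\<lambda>i. snd (fst i) \<union> \<Union>(snd ` snd i)"
  let ?N = "card (snd G0) + k * (card (snd G1) - card (snd G0))"
  let ?N1 = "n ^ (card (fst G1) - card (fst G0)) * 2 ^ 2 ^ card (fst G1)"
  have fC0: "finite ?C0" by (rule copies_fin)
  have fTs: "finite (?Ts H0)" for H0
  proof -
    have "?Ts H0 \<subseteq> Pow (?X H0)" by auto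
    moreover have "finite (?X H0)" by (rule finite_subset[OF _ copies_fin[of G1 n "all_pairs n"]]) auto
    ultimately show ?thesis by (meson finite_Pow_iff finite_subset)
  qed
  have fI: "finite ?I" by (rule finite_SigmaI[OF fC0 fTs])
  have Sall: "?S i \<subseteq> all_pairs n" if i: "i \<in> ?I" for i
  proof -
    obtain H0 T where iHT: "i = (H0, T)" by (cases i)
    have H0: "H0 \<in> ?C0" and T: "T \<subseteq> ?X H0" using i iHT by auto
    have "snd H0 \<subseteq> all_pairs n" by (rule copy_edges[OF H0])
    moreover have "snd H \<subseteq> all_pairs n" if "H \<in> T" for H
      using T that copy_edges by blast
    ultimately show ?thesis using iHT by auto
  qed
  have "gnp_prob n p (BadT n k G0 G1) \<le> gnp_prob n p (\<lambda>E. \<exists>i\<in>?I. ?S i \<subseteq> E)"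
    by (rule gnp_mono[OF p]) (auto simp: BadT_def)
  also have "\<dots> \<le> (\<Sum>i\<in>?I. p ^ card (?S i))" by (rule gnp_union_contains[OF p fI Sall])
  also have "\<dots> \<le> (\<Sum>i\<in>?I. p ^ ?N)"
  proof (rule sum_mono)
    fix i assume i: "i \<in> ?I"
    then have "?N \<le> card (?S i)" using union_card[OF cov, of "fst i" n "snd i" k] by (auto simp: split_beta)
    then show "p ^ card (?S i) \<le> p ^ ?N" using p by (intro power_decreasing) auto
  qed
  also have "\<dots> = real (card ?I) * p ^ ?N" by simp
  also have "\<dots> \<le> (real (card ?C0) * (real ?N1 ^ k / fact k)) * p ^ ?N"
  proof (rule mult_right_mono)
    have "real (card ?I) = (\<Sum>H0\<in>?C0. real (card (?Ts H0)))" using fC0 fTs by (simp add: card_SigmaI)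
    also have "\<dots> \<le> (\<Sum>H0\<in>?C0. real ?N1 ^ k / fact k)"
    proof (rule sum_mono)
      fix H0 assume H0: "H0 \<in> ?C0"
      have fH0: "finite (fst H0)" using graph_fin1[OF copy_graph[OF H0]] .
      have cH0: "card (fst H0) = card (fst G0)" using copy_cards[OF H0 gG0] by simp
      have "card (fst G0) \<le> card (fst G1)" using cover_card[OF cov] by simp
      then have "card (?X H0) \<le> ?N1" using ext_count[OF gG1 fH0] cH0 by simp
      moreover have "finite (?X H0)" by (rule finite_subset[OF _ copies_fin[of G1 n "all_pairs n"]]) auto
      ultimately show "real (card (?Ts H0)) \<le> real ?N1 ^ k / fact k" by (rule ksub_card[rotated])
    qed
    also have "\<dots> = real (card ?C0) * (real ?N1 ^ k / fact k)" by simp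
    finally show "real (card ?I) \<le> real (card ?C0) * (real ?N1 ^ k / fact k)" .
  qed (use p in simp)
  also have "\<dots> \<le> (real (n ^ card (fst G0) * 2 ^ 2 ^ card (fst G0)) * (real ?N1 ^ k / fact k)) * p ^ ?N"
  proof (intro mult_right_mono)
    show "real (card ?C0) \<le> real (n ^ card (fst G0) * 2 ^ 2 ^ card (fst G0))"
      using copies_all_count[OF gG0, of n] by (simp only: of_nat_le_iff)
  qed (use p in auto)
  finally show ?thesis by simp
qed

end

lemma copies_mono: "E \<subseteq> E' \<Longrightarrow> copies G n E \<subseteq> copies G n E'"
  by (auto simp: copies_def subgraph_def graph_le_def)

lemma all_pairs_sub: "e \<in> all_pairs n \<Longrightarrow> \<exists>a b. a \<noteq> b \<and> e = {a,b}"
  by (auto simp: all_pairs_def)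

context Kset
begin

lemma iii_link:
  assumes E: "E \<subseteq> all_pairs n" and ii: "prop_ii K n E" and cov: "primal_cover K G0 G1"
    and H0: "H0 \<in> copies G0 n E" and k: "k \<le> card {H1 \<in> copies G1 n E. graph_le H0 H1}"
  shows "BadT n k G0 G1 E"
proof -
  obtain T where T: "T \<subseteq> {H1 \<in> copies G1 n E. graph_le H0 H1}" "card T = k" "finite T"
    using obtain_subset_with_card_n[OF k] by blast
  have H0': "H0 \<in> copies G0 n (all_pairs n)" using copies_mono[OF E] H0 by blast
  have "T \<subseteq> {H \<in> copies G1 n (all_pairs n). graph_le H0 H}" using T(1) copies_mono[OF E] by blast
  moreover have "disjo H0 T" unfolding disjo_def
  proof (intro ballI impI)
    fix H H' assume "H \<in> T" "H' \<in> T" "H \<noteq> H'"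
    then show "(fst H - fst H0) \<inter> (fst H' - fst H0) = {}"
      using ii cov H0 T(1) unfolding prop_ii_def by blast
  qed
  moreover have "snd H0 \<union> \<Union>(snd ` T) \<subseteq> E" using copy_edges[OF H0] T(1) copy_edges by blast
  ultimately show ?thesis using H0' T(2) unfolding BadT_def by blast
qed

lemma bad_prob2:
  assumes cov: "primal_cover K G0 G1" and p: "0 < p" "p \<le> 1"
    and lam: "lam = real n * p powr d" "lam \<ge> 1"
    and Bc: "Bc \<ge> 2 * exp 1 * 2 ^ 2 ^ card (fst G1)"
    and k: "k = nat \<lfloor>Bc * lam ^ (card (fst G1) - card (fst G0))\<rfloor> + 1"
  shows "gnp_prob n p (BadT n k G0 G1) \<le> 2 ^ 2 ^ card (fst G0) * lam ^ card (fst G0) * (1/2) powr lam"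
proof -
  have G0: "primal G0 K" and G1: "primal G1 K" using cov by (auto simp: primal_cover_def)
  define v0 where "v0 = card (fst G0)"
  define v1 where "v1 = card (fst G1)"
  define m where "m = v1 - v0"
  define E0 where "E0 = card (snd G0)"
  define E1 where "E1 = card (snd G1)"
  define c0 :: real where "c0 = 2 ^ 2 ^ v0"
  define c1 :: real where "c1 = 2 ^ 2 ^ v1"
  have vlt: "v0 < v1" using cover_card[OF cov] by (simp add: v0_def v1_def)
  have m1: "m \<ge> 1" using vlt by (simp add: m_def)
  have e0: "real E0 = d * real v0" using G0 primal_iff by (simp add: E0_def v0_def)
  have e1: "real E1 = d * real v1" using G1 primal_iff by (simp add: E1_def v1_def)
  have E01: "E0 \<le> E1" using e0 e1 vlt d_pos by (smt (verit, best) mult_le_cancel_left_pos of_nat_le_iff less_imp_le_nat)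
  have eD: "real (E1 - E0) = d * real m" using e0 e1 E01 vlt by (simp add: m_def of_nat_diff algebra_simps)
  have pd: "p powr d > 0" using p by simp
  have pE0: "p ^ E0 = (p powr d) ^ v0"
  proof -
    have "p ^ E0 = p powr real E0" using p by (simp add: powr_realpow)
    also have "\<dots> = (p powr d) powr real v0" using e0 by (simp add: powr_powr)
    also have "\<dots> = (p powr d) ^ v0" using pd by (simp add: powr_realpow)
    finally show ?thesis .
  qed
  have pE1: "p ^ (E1 - E0) = (p powr d) ^ m"
  proof -
    have "p ^ (E1 - E0) = p powr real (E1 - E0)" using p by (simp add: powr_realpow)
    also have "\<dots> = (p powr d) powr real m" using eD by (simp add: powr_powr)
    also have "\<dots> = (p powr d) ^ m" using pd by (simp add: powr_realpow)
    finally show ?thesis .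
  qed
  have lam0: "lam \<ge> 0" using lam by simp
  have "gnp_prob n p (BadT n k G0 G1) \<le>
    real (n ^ v0 * 2 ^ 2 ^ v0) * real (n ^ m * 2 ^ 2 ^ v1) ^ k / fact k * p ^ (E0 + k * (E1 - E0))"
    using bad_prob[OF cov, of p n k] p unfolding v0_def v1_def m_def E0_def E1_def by simp
  also have "\<dots> = (c0 * lam ^ v0) * ((c1 * lam ^ m) ^ k / fact k)"
  proof -
    define q where "q = p ^ (E1 - E0)"
    have pk: "p ^ (E0 + k * (E1 - E0)) = p ^ E0 * q ^ k" unfolding q_def power_add by (simp add: power_mult[symmetric] mult.commute)
    have l0: "real n ^ v0 * p ^ E0 = lam ^ v0" using pE0 lam(1) by (simp add: power_mult_distrib)
    have l1: "real n ^ m * q = lam ^ m" using pE1 lam(1) by (simp add: q_def power_mult_distrib)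
    have "real (n ^ v0 * 2 ^ 2 ^ v0) * real (n ^ m * 2 ^ 2 ^ v1) ^ k / fact k * p ^ (E0 + k * (E1 - E0))
       = (c0 * (real n ^ v0 * p ^ E0)) * ((c1 * (real n ^ m * q)) ^ k / fact k)"
      unfolding pk by (simp add: c0_def c1_def power_mult_distrib)
    also have "\<dots> = (c0 * lam ^ v0) * ((c1 * lam ^ m) ^ k / fact k)" by (simp only: l0 l1)
    finally show ?thesis .
  qed
  also have "\<dots> \<le> (c0 * lam ^ v0) * (1/2) powr lam"
  proof (rule mult_left_mono)
    have kpos: "k \<ge> 1" using k by simp
    have c1pos: "c1 > 0" by (simp add: c1_def)
    have e1: "exp 1 \<ge> (1::real)" by simp
    have c11: "c1 \<ge> 1" by (simp add: c1_def)
    have "2 * exp 1 * c1 \<ge> 1 * 1 * 1" using e1 c11 by (intro mult_mono) auto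
    then have B1: "Bc \<ge> 1" using Bc by (simp add: c1_def v1_def)
    have x0: "Bc * lam ^ m \<ge> 0" using B1 lam0 by simp
    have q1: "real (nat \<lfloor>Bc * lam ^ m\<rfloor>) = of_int \<lfloor>Bc * lam ^ m\<rfloor>" using x0 by simp
    have q2: "Bc * lam ^ m < of_int \<lfloor>Bc * lam ^ m\<rfloor> + 1" by (rule real_of_int_floor_add_one_gt)
    have q3: "k = nat \<lfloor>Bc * lam ^ m\<rfloor> + 1" using k by (simp add: m_def v1_def v0_def)
    have "real k = real (nat \<lfloor>Bc * lam ^ m\<rfloor>) + 1" using q3 by simp
    then have fl: "Bc * lam ^ m < real k" using q1 q2 by linarith
    have lm: "lam ^ m \<ge> lam" using lam(2) m1 by (metis power_increasing power_one_right)
    have "lam ^ m \<le> Bc * lam ^ m" using B1 lam0 by (simp add: mult_le_cancel_right1)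
    then have klam: "real k \<ge> lam" using fl lm by linarith
    have "(c1 * lam ^ m) ^ k / fact k = (c1 * lam ^ m / real k) ^ k * (real k ^ k / fact k)"
      using kpos by (simp add: power_divide field_simps)
    also have "\<dots> \<le> (c1 * lam ^ m / real k) ^ k * exp (real k)"
      by (rule mult_left_mono[OF fact_bound]) (use c1pos lam0 in simp)
    also have "\<dots> = (c1 * exp 1 * lam ^ m / real k) ^ k"
    proof -
      have ek: "exp (real k) = exp 1 ^ k" using exp_of_nat_mult[of k 1] by simp
      have "c1 * exp 1 * lam ^ m / real k = (c1 * lam ^ m / real k) * exp 1" by simp
      then show ?thesis unfolding ek by (simp only: power_mult_distrib)
    qed
    also have "\<dots> \<le> (1/2) ^ k"
    proof (rule power_mono)
      have "2 * exp 1 * c1 \<le> Bc" using Bc by (simp add: c1_def v1_def)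
      then have "(2 * exp 1 * c1) * lam ^ m \<le> Bc * lam ^ m" using lam0 by (intro mult_right_mono) auto
      then have "2 * (c1 * exp 1 * lam ^ m) \<le> Bc * lam ^ m" by (simp add: algebra_simps)
      then have "2 * (c1 * exp 1 * lam ^ m) \<le> real k" using fl by linarith
      then show "c1 * exp 1 * lam ^ m / real k \<le> 1/2" using kpos by (simp add: field_simps)
      show "0 \<le> c1 * exp 1 * lam ^ m / real k" using c1pos lam0 by simp
    qed
    also have "\<dots> = (1/2) powr real k" by (simp add: powr_realpow)
    also have "\<dots> \<le> (1/2) powr lam" using klam by (intro powr_mono') auto
    finally show "(c1 * lam ^ m) ^ k / fact k \<le> (1/2) powr lam" .
    show "0 \<le> c0 * lam ^ v0" using lam0 by (simp add: c0_def)
  qed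
  finally show ?thesis by (simp add: c0_def v0_def)
qed

end

context Kset
begin

lemma dens_int: "real a > d * real b \<Longrightarrow> real a \<ge> d * real b + 1 / real (card (fst K))"
proof -
  assume a: "real a > d * real b"
  let ?vK = "card (fst K)" and ?eK = "card (snd K)"
  have vK: "real ?vK > 0" using vK_pos by simp
  have dd: "d = real ?eK / real ?vK" using vK d_eq by (simp add: field_simps)
  have "real a * real ?vK > real ?eK * real b" using a vK by (simp add: dd field_simps)
  then have "a * ?vK > ?eK * b" by (metis of_nat_less_iff of_nat_mult)
  then have "a * ?vK \<ge> ?eK * b + 1" by simp
  then have "real a * real ?vK \<ge> real ?eK * real b + 1" by (metis of_nat_1 of_nat_add of_nat_le_iff of_nat_mult)
  then show ?thesis using vK by (simp add: dd field_simps)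
qed

lemma badD_prob:
  assumes p: "0 < p" "p \<le> 1"
  shows "gnp_prob n p (\<lambda>E. \<not> Dgood n E) \<le>
     2 ^ 2 ^ (2 * card (fst K)) * (\<Sum>k\<le>2 * card (fst K). real n ^ k * p powr (d * real k + 1 / real (card (fst K))))"
proof -
  define M where "M = 2 * card (fst K)"
  define g where "g = (\<lambda>V::nat set. p powr (d * real (card V) + 1 / real (card (fst K))))"
  define Vs where "Vs = {V. V \<subseteq> {1..n} \<and> card V \<le> M}"
  define I where "I = {(V, S). V \<in> Vs \<and> S \<subseteq> {e \<in> all_pairs n. e \<subseteq> V} \<and> d * real (card V) < real (card S)}"
  have p': "0 \<le> p" using p by simp
  have fVs: "finite Vs" by (rule finite_subset[of _ "Pow {1..n}"]) (auto simp: Vs_def)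
  have finPP: "finite (Pow (Pow V))" if "V \<in> Vs" for V
  proof -
    have "V \<subseteq> {1..n}" using that unfolding Vs_def by blast
    then have "finite V" by (rule fin_nat_sub)
    then show ?thesis by simp
  qed
  have ISig: "I \<subseteq> Sigma Vs (\<lambda>V. Pow (Pow V))"
  proof
    fix i assume "i \<in> I"
    moreover obtain V S where iVS: "i = (V, S)" by (cases i)
    ultimately have "V \<in> Vs" "S \<subseteq> {e \<in> all_pairs n. e \<subseteq> V}" unfolding I_def by blast+
    then show "i \<in> Sigma Vs (\<lambda>V. Pow (Pow V))" using iVS by blast
  qed
  have fSig: "finite (Sigma Vs (\<lambda>V. Pow (Pow V)))" by (rule finite_SigmaI[OF fVs finPP])
  have fI: "finite I" using ISig fSig by (rule finite_subset)
  have Sall: "snd i \<subseteq> all_pairs n" if "i \<in> I" for i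
  proof -
    obtain V S where iVS: "i = (V, S)" by (cases i)
    then have "S \<subseteq> {e \<in> all_pairs n. e \<subseteq> V}" using that unfolding I_def by blast
    moreover have "snd i = S" using iVS by simp
    ultimately show ?thesis by blast
  qed
  have "gnp_prob n p (\<lambda>E. \<not> Dgood n E) \<le> gnp_prob n p (\<lambda>E. \<exists>i\<in>I. snd i \<subseteq> E)"
  proof (rule gnp_mono[where n=n and P="\<lambda>E. \<not> Dgood n E" and Q="\<lambda>E. \<exists>i\<in>I. snd i \<subseteq> E", OF p' p(2)])
    fix E assume E: "E \<subseteq> all_pairs n" "\<not> Dgood n E"
    have "\<exists>V. V \<subseteq> {1..n} \<and> card V \<le> M \<and> \<not> real (card {e \<in> E. e \<subseteq> V}) \<le> d * real (card V)"
      using E(2) unfolding Dgood_def M_def by blast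
    then obtain V where V: "V \<subseteq> {1..n}" "card V \<le> M" "\<not> real (card {e \<in> E. e \<subseteq> V}) \<le> d * real (card V)"
      by blast
    then have V3: "real (card {e \<in> E. e \<subseteq> V}) > d * real (card V)" by simp
    have "V \<in> Vs" using V by (simp add: Vs_def)
    moreover have "{e \<in> E. e \<subseteq> V} \<subseteq> {e \<in> all_pairs n. e \<subseteq> V}" using E(1) by blast
    ultimately have "(V, {e \<in> E. e \<subseteq> V}) \<in> I" using V3 unfolding I_def by blast
    moreover have "snd (V, {e \<in> E. e \<subseteq> V}) \<subseteq> E" by auto
    ultimately show "\<exists>i\<in>I. snd i \<subseteq> E" by blast
  qed
  also have "\<dots> \<le> (\<Sum>i\<in>I. p ^ card (snd i))" by (rule gnp_union_contains[OF p' p(2) fI Sall])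
  also have "\<dots> \<le> (\<Sum>i\<in>I. g (fst i))"
  proof (rule sum_mono)
    fix i assume i: "i \<in> I"
    obtain V S where iVS: "i = (V, S)" by (cases i)
    have "d * real (card V) < real (card S)" using i iVS by (simp add: I_def)
    then have ge: "real (card S) \<ge> d * real (card V) + 1 / real (card (fst K))" by (rule dens_int)
    have "p ^ card S = p powr real (card S)" using p by (simp add: powr_realpow)
    also have "\<dots> \<le> g V" unfolding g_def by (rule powr_mono'[OF ge]) (use p in auto)
    finally show "p ^ card (snd i) \<le> g (fst i)" using iVS by simp
  qed
  also have "\<dots> \<le> (\<Sum>i\<in>Sigma Vs (\<lambda>V. Pow (Pow V)). g (fst i))"
    by (rule sum_mono2[OF fSig ISig]) (simp add: g_def)
  also have "\<dots> = (\<Sum>V\<in>Vs. \<Sum>S\<in>Pow (Pow V). g V)"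
  proof -
    have "(\<Sum>V\<in>Vs. \<Sum>S\<in>Pow (Pow V). g V) = (\<Sum>(V,S)\<in>Sigma Vs (\<lambda>V. Pow (Pow V)). g V)"
      by (rule sum.Sigma[OF fVs]) (use finPP in blast)
    also have "\<dots> = (\<Sum>i\<in>Sigma Vs (\<lambda>V. Pow (Pow V)). g (fst i))" by (simp add: split_beta)
    finally show ?thesis by simp
  qed
  also have "\<dots> = (\<Sum>V\<in>Vs. real (card (Pow (Pow V))) * g V)" by simp
  also have "\<dots> \<le> (\<Sum>V\<in>Vs. 2 ^ 2 ^ M * g V)"
  proof (rule sum_mono)
    fix V assume V: "V \<in> Vs"
    have "V \<subseteq> {1..n}" using V unfolding Vs_def by blast
    then have fV: "finite V" by (rule fin_nat_sub)
    have "card (Pow (Pow V)) = 2 ^ 2 ^ card V" using fV by (simp add: card_Pow)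
    also have "\<dots> \<le> 2 ^ 2 ^ M" using V by (intro power_increasing) (auto simp: Vs_def)
    finally have "real (card (Pow (Pow V))) \<le> real ((2::nat) ^ 2 ^ M)" by (simp only: of_nat_le_iff)
    then have "real (card (Pow (Pow V))) \<le> 2 ^ 2 ^ M" by simp
    then show "real (card (Pow (Pow V))) * g V \<le> 2 ^ 2 ^ M * g V" by (rule mult_right_mono) (simp add: g_def)
  qed
  also have "\<dots> = 2 ^ 2 ^ M * (\<Sum>V\<in>Vs. g V)" by (simp add: sum_distrib_left)
  also have "(\<Sum>V\<in>Vs. g V) = (\<Sum>k\<le>M. \<Sum>V\<in>{V. V \<subseteq> {1..n} \<and> card V = k}. g V)"
  proof -
    have "Vs = (\<Union>k\<le>M. {V. V \<subseteq> {1..n} \<and> card V = k})" by (auto simp: Vs_def)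
    moreover have "(\<Sum>V\<in>(\<Union>k\<le>M. {V. V \<subseteq> {1..n} \<and> card V = k}). g V) = (\<Sum>k\<le>M. \<Sum>V\<in>{V. V \<subseteq> {1..n} \<and> card V = k}. g V)"
      by (rule sum.UNION_disjoint) (auto intro: finite_subset[of _ "Pow {1..n}"])
    ultimately show ?thesis by simp
  qed
  also have "\<dots> = (\<Sum>k\<le>M. real (n choose k) * p powr (d * real k + 1 / real (card (fst K))))"
  proof (rule sum.cong[OF refl])
    fix k
    have "(\<Sum>V\<in>{V. V \<subseteq> {1..n} \<and> card V = k}. g V) = (\<Sum>V\<in>{V. V \<subseteq> {1..n} \<and> card V = k}. p powr (d * real k + 1 / real (card (fst K))))"
      by (rule sum.cong[OF refl]) (simp add: g_def)
    also have "\<dots> = real (n choose k) * p powr (d * real k + 1 / real (card (fst K)))"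
      using n_subsets[of "{1..n}" k] by simp
    finally show "(\<Sum>V\<in>{V. V \<subseteq> {1..n} \<and> card V = k}. g V) = real (n choose k) * p powr (d * real k + 1 / real (card (fst K)))" .
  qed
  also have "\<dots> \<le> (\<Sum>k\<le>M. real n ^ k * p powr (d * real k + 1 / real (card (fst K))))"
  proof (rule sum_mono)
    fix k
    have "real (n choose k) \<le> real n ^ k" using choose_le_pow[of n k] by (metis of_nat_le_iff of_nat_power)
    then show "real (n choose k) * p powr (d * real k + 1 / real (card (fst K))) \<le> real n ^ k * p powr (d * real k + 1 / real (card (fst K)))"
      by (rule mult_right_mono) simp
  qed
  finally show ?thesis unfolding M_def by (simp add: mult_left_mono)
qed

end

lemma lam_top:
  fixes p :: "nat \<Rightarrow> real" and d :: real
  assumes d: "d > 0" and p0: "\<And>n. 0 \<le> p n" and o: "(\<lambda>n. real n powr (- 1 / d)) \<in> o(p)"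
  shows "filterlim (\<lambda>n. real n * p n powr d) at_top sequentially"
proof (rule filterlim_at_top[THEN iffD2], intro allI)
  fix Z :: real
  define Z' where "Z' = max Z 1"
  have Z'1: "Z' \<ge> 1" by (simp add: Z'_def)
  define \<epsilon> where "\<epsilon> = Z' powr (- 1 / d)"
  have eps: "\<epsilon> > 0" using Z'1 by (simp add: \<epsilon>_def)
  have ev: "eventually (\<lambda>n. norm (real n powr (- 1 / d)) \<le> \<epsilon> * norm (p n)) sequentially"
    by (rule landau_o.smallD[OF o eps])
  show "eventually (\<lambda>n. Z \<le> real n * p n powr d) sequentially"
    using ev eventually_ge_at_top[of 1]
  proof eventually_elim
    case (elim n)
    have n1: "real n \<ge> 1" using elim(2) by simp
    define x where "x = real n powr (- 1 / d)"
    have x0: "x > 0" using n1 by (simp add: x_def)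
    have le: "x \<le> \<epsilon> * p n" using elim(1) x0 p0[of n] by (simp add: x_def)
    then have le': "x / \<epsilon> \<le> p n" using eps by (simp add: field_simps)
    have "(x / \<epsilon>) powr d \<le> p n powr d" by (rule powr_mono2) (use d x0 eps le' in auto)
    moreover have "(x / \<epsilon>) powr d = x powr d / \<epsilon> powr d" using x0 eps by (simp add: powr_divide)
    moreover have "x powr d = 1 / real n"
    proof -
      have "x powr d = real n powr (- 1 / d * d)" using n1 by (simp add: x_def powr_powr)
      also have "\<dots> = real n powr (- 1)" using d by simp
      also have "\<dots> = 1 / real n" using n1 by (simp add: powr_minus divide_inverse)
      finally show ?thesis .
    qed
    moreover have "\<epsilon> powr d = 1 / Z'"
    proof -
      have "\<epsilon> powr d = Z' powr (- 1 / d * d)" using Z'1 by (simp add: \<epsilon>_def powr_powr)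
      also have "\<dots> = Z' powr (- 1)" using d by simp
      also have "\<dots> = 1 / Z'" using Z'1 by (simp add: powr_minus divide_inverse)
      finally show ?thesis .
    qed
    ultimately have "Z' / real n \<le> p n powr d" using Z'1 n1 by (simp add: field_simps)
    then have "Z' \<le> real n * p n powr d" using n1 by (simp add: field_simps)
    then show ?case by (simp add: Z'_def)
  qed
qed

lemma lam_pos_ev:
  fixes p :: "nat \<Rightarrow> real" and d :: real
  assumes d: "d > 0" and p0: "\<And>n. 0 \<le> p n" and o: "(\<lambda>n. real n powr (- 1 / d)) \<in> o(p)"
  shows "eventually (\<lambda>n. p n > 0) sequentially"
proof -
  have ev: "eventually (\<lambda>n. norm (real n powr (- 1 / d)) \<le> 1 * norm (p n)) sequentially"
    by (rule landau_o.smallD[OF o]) simp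
  show ?thesis using ev eventually_ge_at_top[of 1]
  proof eventually_elim
    case (elim n)
    have pos: "real n powr (- 1 / d) > 0" using elim(2) by simp
    have "real n powr (- 1 / d) \<le> p n" using elim(1) p0[of n] pos by simp
    then show ?case using pos by linarith
  qed
qed

lemma null_pair:
  fixes lam :: "nat \<Rightarrow> real"
  assumes "filterlim lam at_top sequentially"
  shows "(\<lambda>n. c0 * lam n ^ v0 * (1/2) powr lam n) \<longlonglongrightarrow> 0"
proof -
  have h: "((\<lambda>x::real. x ^ v0 * (1/2) powr x) \<longlongrightarrow> 0) at_top" by real_asymp
  have "(\<lambda>n. lam n ^ v0 * (1/2) powr lam n) \<longlonglongrightarrow> 0"
    using filterlim_compose[OF h assms] by simp
  then have "(\<lambda>n. c0 * (lam n ^ v0 * (1/2) powr lam n)) \<longlonglongrightarrow> c0 * 0" by (intro tendsto_mult tendsto_const)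
  then show ?thesis by (simp add: mult.assoc)
qed

lemma null_D:
  fixes p :: "nat \<Rightarrow> real" and d v \<beta> :: real and M :: nat
  assumes d: "d > 0" and v: "v \<ge> 1" and p0: "\<And>n. 0 \<le> p n"
    and \<beta>: "\<beta> = 1 / (2 * d * v * (d * real M + 1))"
    and O: "p \<in> O(\<lambda>n. real n powr (\<beta> - 1 / d))"
  shows "(\<lambda>n. \<Sum>k\<le>M. real n ^ k * p n powr (d * real k + 1 / v)) \<longlonglongrightarrow> 0"
proof -
  obtain c where c: "c > 0" and ev: "eventually (\<lambda>n. norm (p n) \<le> c * norm (real n powr (\<beta> - 1 / d))) sequentially"
    using landau_o.bigE[OF O] by blast
  have "d * real M + 1 > 0" using d by (simp add: add_nonneg_pos)
  then have "2 * d * v * (d * real M + 1) > 0" using d v by simp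
  then have bpos: "\<beta> > 0" using \<beta> by simp
  have tm: "(\<lambda>n. real n ^ k * p n powr (d * real k + 1 / v)) \<longlonglongrightarrow> 0" if k: "k \<in> {..M}" for k
  proof -
    define a where "a = d * real k + 1 / v"
    define e where "e = real k + (\<beta> - 1 / d) * a"
    have a0: "a \<ge> 0" using d v by (simp add: a_def)
    have e_eq: "e = \<beta> * (d * real k + 1 / v) - 1 / (d * v)" using d v by (simp add: e_def a_def field_simps)
    have "\<beta> * (d * real k + 1 / v) \<le> \<beta> * (d * real M + 1)"
    proof (rule mult_left_mono)
      have "real k \<le> real M" using k by simp
      then have "d * real k \<le> d * real M" using d by simp
      moreover have "1 / v \<le> 1" using v by simp
      ultimately show "d * real k + 1 / v \<le> d * real M + 1" by linarith
    qed (use bpos in simp)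
    also have "\<dots> = 1 / (2 * d * v)"
    proof -
      have q: "d * real M + 1 > 0" using d by (simp add: add_nonneg_pos)
      have "1 / (2 * d * v * (d * real M + 1)) * (d * real M + 1) = (d * real M + 1) / ((2 * d * v) * (d * real M + 1))"
        by simp
      also have "\<dots> = 1 / (2 * d * v)" using q by simp
      finally show ?thesis unfolding \<beta> .
    qed
    finally have "e \<le> 1 / (2 * d * v) - 1 / (d * v)" using e_eq by simp
    also have "\<dots> < 0" using d v by (simp add: field_simps)
    finally have eneg: "e < 0" .
    have up: "((\<lambda>n. c powr a * real n powr e) \<longlonglongrightarrow> c powr a * 0)"
      by (intro tendsto_mult tendsto_const tendsto_neg_powr[OF eneg] filterlim_real_sequentially)
    show ?thesis
    proof (rule tendsto_sandwich[OF _ _ tendsto_const])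
      show "eventually (\<lambda>n. 0 \<le> real n ^ k * p n powr (d * real k + 1 / v)) sequentially" by simp
      show "eventually (\<lambda>n. real n ^ k * p n powr (d * real k + 1 / v) \<le> c powr a * real n powr e) sequentially"
        using ev eventually_ge_at_top[of 1]
      proof eventually_elim
        case (elim n)
        have n1: "real n \<ge> 1" using elim(2) by simp
        have pc: "p n \<le> c * real n powr (\<beta> - 1 / d)" using elim(1) p0[of n] by simp
        have "p n powr a \<le> (c * real n powr (\<beta> - 1 / d)) powr a" by (rule powr_mono2[OF a0 p0 pc])
        also have "\<dots> = c powr a * real n powr ((\<beta> - 1 / d) * a)" using c n1 by (simp add: powr_mult powr_powr)
        finally have 1: "p n powr a \<le> c powr a * real n powr ((\<beta> - 1 / d) * a)" .
        have 2: "real n ^ k = real n powr real k" using n1 by (simp add: powr_realpow)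
        have "real n ^ k * p n powr a \<le> real n ^ k * (c powr a * real n powr ((\<beta> - 1 / d) * a))"
          by (rule mult_left_mono[OF 1]) simp
        also have "\<dots> = c powr a * (real n powr real k * real n powr ((\<beta> - 1 / d) * a))" using 2 by simp
        also have "\<dots> = c powr a * real n powr e" using n1 by (simp add: powr_add[symmetric] e_def)
        finally show ?case by (simp add: a_def)
      qed
    qed (use up in simp)
  qed
  have "(\<lambda>n. \<Sum>k\<le>M. real n ^ k * p n powr (d * real k + 1 / v)) \<longlonglongrightarrow> (\<Sum>k\<le>M. 0)"
    by (rule tendsto_sum) (rule tm)
  then show ?thesis by simp
qed


context Kset
begin

lemma pairs_fin: "finite {q. primal_cover K (fst q) (snd q)}"
proof -
  have "{q. primal_cover K (fst q) (snd q)} \<subseteq> {J. primal J K} \<times> {J. primal J K}"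
    by (auto simp: primal_cover_def)
  moreover have "finite ({J. primal J K} \<times> {J. primal J K})" using primal_fin by simp
  ultimately show ?thesis by (rule finite_subset)
qed

lemma good_target:
  assumes p: "0 < p" "p \<le> 1" and lam: "lam = real n * p powr d" "lam \<ge> 1" and B: "B \<ge> 1"
    and E: "E \<subseteq> all_pairs n" and D: "Dgood n E"
    and nb: "\<forall>q\<in>{q. primal_cover K (fst q) (snd q)}.
       \<not> BadT n (nat \<lfloor>B * lam ^ (card (fst (snd q)) - card (fst (fst q)))\<rfloor> + 1) (fst q) (snd q) E"
  shows "prop_i K n E \<and> prop_ii K n E \<and> prop_iii K B lam n E \<and> prop_iv K n E \<and>
     prop_v K (real (card (fst K)) * (real (card {J. primal J K}) * B) ^ card (fst K)) lam n E"
proof -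
  have i: "prop_i K n E" by (rule prop_i_det[OF D])
  have ii: "prop_ii K n E" by (rule prop_ii_det[OF D])
  have iv: "prop_iv K n E" by (rule prop_iv_det[OF D])
  have iii: "prop_iii K B lam n E" unfolding prop_iii_def
  proof (intro allI impI ballI)
    fix G0 G1 H0 assume cov: "primal_cover K G0 G1" and H0: "H0 \<in> copies G0 n E"
    define x where "x = B * lam ^ (card (fst G1) - card (fst G0))"
    show "real (card {H1 \<in> copies G1 n E. graph_le H0 H1}) \<le> B * lam ^ (card (fst G1) - card (fst G0))"
    proof (rule ccontr)
      assume "\<not> ?thesis"
      then have gt: "real (card {H1 \<in> copies G1 n E. graph_le H0 H1}) > x" by (simp add: x_def)
      have x0: "x \<ge> 0" using B lam by (simp add: x_def)
      have "real (nat \<lfloor>x\<rfloor>) = of_int \<lfloor>x\<rfloor>" using x0 by simp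
      moreover have "of_int \<lfloor>x\<rfloor> \<le> x" by (rule of_int_floor_le)
      ultimately have "real (nat \<lfloor>x\<rfloor>) < real (card {H1 \<in> copies G1 n E. graph_le H0 H1})" using gt by linarith
      then have "nat \<lfloor>x\<rfloor> + 1 \<le> card {H1 \<in> copies G1 n E. graph_le H0 H1}" by (simp only: of_nat_less_iff)
      then have "BadT n (nat \<lfloor>x\<rfloor> + 1) G0 G1 E" by (rule iii_link[OF E ii cov H0])
      moreover have "(G0, G1) \<in> {q. primal_cover K (fst q) (snd q)}" using cov by simp
      ultimately have "\<not> BadT n (nat \<lfloor>B * lam ^ (card (fst (snd (G0, G1))) - card (fst (fst (G0, G1))))\<rfloor> + 1) (fst (G0, G1)) (snd (G0, G1)) E"
        using nb by blast
      then show False using \<open>BadT n (nat \<lfloor>x\<rfloor> + 1) G0 G1 E\<close> by (simp add: x_def)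
    qed
  qed
  have v: "prop_v K (real (card (fst K)) * (real (card {J. primal J K}) * B) ^ card (fst K)) lam n E"
    by (rule prop_v_det[OF iii iv B lam(2)])
  show ?thesis using i ii iii iv v by blast
qed

lemma bad_bound:
  assumes p: "0 < p" "p \<le> 1" and lam: "lam = real n * p powr d" "lam \<ge> 1"
    and B: "B = 2 * exp 1 * 2 ^ 2 ^ card (fst K)"
  shows "gnp_prob n p (\<lambda>E. \<not> (Dgood n E \<and> (\<forall>q\<in>{q. primal_cover K (fst q) (snd q)}.
       \<not> BadT n (nat \<lfloor>B * lam ^ (card (fst (snd q)) - card (fst (fst q)))\<rfloor> + 1) (fst q) (snd q) E)))
    \<le> 2 ^ 2 ^ (2 * card (fst K)) * (\<Sum>k\<le>2 * card (fst K). real n ^ k * p powr (d * real k + 1 / real (card (fst K))))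
      + (\<Sum>q\<in>{q. primal_cover K (fst q) (snd q)}. 2 ^ 2 ^ card (fst (fst q)) * lam ^ card (fst (fst q)) * (1/2) powr lam)"
proof -
  let ?Pairs = "{q. primal_cover K (fst q) (snd q)}"
  let ?k = "\<lambda>q. nat \<lfloor>B * lam ^ (card (fst (snd q)) - card (fst (fst q)))\<rfloor> + 1"
  define Qe where "Qe = (\<lambda>(i :: ('a gr \<times> 'a gr) option) E. case i of None \<Rightarrow> \<not> Dgood n E | Some q \<Rightarrow> BadT n (?k q) (fst q) (snd q) E)"
  let ?I = "insert None (Some ` ?Pairs)"
  have p': "0 \<le> p" using p by simp
  have fI: "finite ?I" using pairs_fin by simp
  have "gnp_prob n p (\<lambda>E. \<not> (Dgood n E \<and> (\<forall>q\<in>?Pairs. \<not> BadT n (?k q) (fst q) (snd q) E)))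
      \<le> gnp_prob n p (\<lambda>E. \<exists>i\<in>?I. Qe i E)"
    by (rule gnp_mono[OF p' p(2)]) (auto simp: Qe_def)
  also have "\<dots> \<le> (\<Sum>i\<in>?I. gnp_prob n p (Qe i))" by (rule gnp_union[OF p' p(2) fI])
  also have "\<dots> = gnp_prob n p (Qe None) + (\<Sum>i\<in>Some ` ?Pairs. gnp_prob n p (Qe i))"
    by (rule sum.insert) (use pairs_fin in auto)
  also have "(\<Sum>i\<in>Some ` ?Pairs. gnp_prob n p (Qe i)) = (\<Sum>q\<in>?Pairs. gnp_prob n p (Qe (Some q)))"
    by (rule sum.reindex[unfolded comp_def]) simp
  also have "gnp_prob n p (Qe None) \<le> 2 ^ 2 ^ (2 * card (fst K)) * (\<Sum>k\<le>2 * card (fst K). real n ^ k * p powr (d * real k + 1 / real (card (fst K))))"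
    unfolding Qe_def using badD_prob[OF p] by simp
  also have "(\<Sum>q\<in>?Pairs. gnp_prob n p (Qe (Some q))) \<le> (\<Sum>q\<in>?Pairs. 2 ^ 2 ^ card (fst (fst q)) * lam ^ card (fst (fst q)) * (1/2) powr lam)"
  proof (rule sum_mono)
    fix q assume q: "q \<in> ?Pairs"
    then have cov: "primal_cover K (fst q) (snd q)" by simp
    have "card (fst (snd q)) \<le> card (fst K)" using cov primal_vK by (simp add: primal_cover_def)
    then have "(2::real) ^ 2 ^ card (fst (snd q)) \<le> 2 ^ 2 ^ card (fst K)" by (intro power_increasing) auto
    then have Bc: "B \<ge> 2 * exp 1 * 2 ^ 2 ^ card (fst (snd q))" using B by simp
    show "gnp_prob n p (Qe (Some q)) \<le> 2 ^ 2 ^ card (fst (fst q)) * lam ^ card (fst (fst q)) * (1/2) powr lam"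
      unfolding Qe_def using bad_prob2[OF cov p lam Bc refl] by simp
  qed
  finally show ?thesis by simp
qed

end

context Kset
begin

lemma main:
  "\<exists>\<beta> B C :: real. \<beta> > 0 \<and> B > 0 \<and> C > 0 \<and>
    (\<forall>p :: nat \<Rightarrow> real. (\<forall>n. 0 \<le> p n \<and> p n \<le> 1) \<and>
       (\<lambda>n. real n powr (- 1 / dens K)) \<in> o(p) \<and>
       p \<in> O(\<lambda>n. real n powr (\<beta> - 1 / dens K)) \<longrightarrow>
       (\<lambda>n. gnp_prob n (p n) (\<lambda>E.
          let lam = real n * p n powr dens K in
          prop_i K n E \<and> prop_ii K n E \<and> prop_iii K B lam n E \<and>
          prop_iv K n E \<and> prop_v K C lam n E)) \<longlonglongrightarrow> 1)"
proof -
  define vK where "vK = card (fst K)"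
  define M where "M = 2 * vK"
  define \<beta> where "\<beta> = 1 / (2 * d * real vK * (d * real M + 1))"
  define B :: real where "B = 2 * exp 1 * 2 ^ 2 ^ vK"
  define Q where "Q = real (card {J. primal J K}) * B"
  define C where "C = real vK * Q ^ vK"
  have e1: "exp 1 \<ge> (1::real)" by simp
  have "(2::real) ^ 2 ^ vK \<ge> 1" by simp
  then have "2 * exp 1 * 2 ^ 2 ^ vK \<ge> (1::real) * 1 * 1" using e1 by (intro mult_mono) auto
  then have B1: "B \<ge> 1" by (simp add: B_def)
  have Pn: "card {J. primal J K} \<ge> 1"
    using primalK primal_fin by (metis (mono_tags, lifting) One_nat_def Suc_leI card_gt_0_iff empty_iff mem_Collect_eq)
  have Q1: "Q \<ge> 1" unfolding Q_def using Pn B1 by (metis mult_mono' of_nat_1 of_nat_le_iff mult_1_left zero_le_one)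
  have vK1: "real vK \<ge> 1" using vK_pos by (simp add: vK_def)
  have q: "d * real M + 1 > 0" using d_pos by (simp add: add_nonneg_pos)
  have "2 * d * real vK * (d * real M + 1) > 0" using d_pos vK1 q by simp
  then have bpos: "\<beta> > 0" by (simp add: \<beta>_def)
  have Cpos: "C > 0" unfolding C_def using vK1 Q1 by simp
  show ?thesis
  proof (intro exI conjI allI impI)
    show "\<beta> > 0" "B > 0" "C > 0" using bpos B1 Cpos by auto
    fix p :: "nat \<Rightarrow> real"
    assume hp: "(\<forall>n. 0 \<le> p n \<and> p n \<le> 1) \<and> (\<lambda>n. real n powr (- 1 / dens K)) \<in> o(p) \<and>
       p \<in> O(\<lambda>n. real n powr (\<beta> - 1 / dens K))"
    have p0: "\<And>n. 0 \<le> p n" and p1: "\<And>n. p n \<le> 1" using hp by auto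
    have o: "(\<lambda>n. real n powr (- 1 / d)) \<in> o(p)" using hp by (simp add: d_def)
    have O: "p \<in> O(\<lambda>n. real n powr (\<beta> - 1 / d))" using hp by (simp add: d_def)
    define lam where "lam = (\<lambda>n. real n * p n powr d)"
    have top: "filterlim lam at_top sequentially" unfolding lam_def by (rule lam_top[OF d_pos p0 o])
    have evp: "eventually (\<lambda>n. p n > 0) sequentially" by (rule lam_pos_ev[OF d_pos p0 o])
    have evl: "eventually (\<lambda>n. lam n \<ge> 1) sequentially" using top by (simp add: filterlim_at_top)
    let ?Pairs = "{q. primal_cover K (fst q) (snd q)}"
    define bad where "bad = (\<lambda>n. 2 ^ 2 ^ (2 * card (fst K)) * (\<Sum>k\<le>2 * card (fst K). real n ^ k * p n powr (d * real k + 1 / real (card (fst K))))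
      + (\<Sum>q\<in>?Pairs. 2 ^ 2 ^ card (fst (fst q)) * lam n ^ card (fst (fst q)) * (1/2) powr lam n))"
    have bad0: "bad \<longlonglongrightarrow> 0"
    proof -
      have s1: "(\<lambda>n. \<Sum>k\<le>M. real n ^ k * p n powr (d * real k + 1 / real vK)) \<longlonglongrightarrow> 0"
        by (rule null_D[OF d_pos vK1 p0 \<beta>_def O])
      have t1: "(\<lambda>n. 2 ^ 2 ^ (2 * card (fst K)) * (\<Sum>k\<le>2 * card (fst K). real n ^ k * p n powr (d * real k + 1 / real (card (fst K))))) \<longlonglongrightarrow> 2 ^ 2 ^ (2 * card (fst K)) * 0"
        using s1 unfolding M_def vK_def by (intro tendsto_mult tendsto_const)
      have t2: "(\<lambda>n. \<Sum>q\<in>?Pairs. 2 ^ 2 ^ card (fst (fst q)) * lam n ^ card (fst (fst q)) * (1/2) powr lam n) \<longlonglongrightarrow> (\<Sum>q\<in>?Pairs. 0)"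
        by (rule tendsto_sum) (rule null_pair[OF top])
      have "bad \<longlonglongrightarrow> 2 ^ 2 ^ (2 * card (fst K)) * 0 + (\<Sum>q\<in>?Pairs. 0)"
        unfolding bad_def by (rule tendsto_add[OF t1 t2])
      then show ?thesis by simp
    qed
    let ?target = "\<lambda>n E. let lam = real n * p n powr dens K in
          prop_i K n E \<and> prop_ii K n E \<and> prop_iii K B lam n E \<and>
          prop_iv K n E \<and> prop_v K C lam n E"
    show "(\<lambda>n. gnp_prob n (p n) (?target n)) \<longlonglongrightarrow> 1"
    proof (rule tendsto_sandwich[of "\<lambda>n. 1 - bad n" _ _ "\<lambda>n. 1"])
      show "eventually (\<lambda>n. 1 - bad n \<le> gnp_prob n (p n) (?target n)) sequentially"
        using evp evl
      proof eventually_elim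
        case (elim n)
        have pn: "0 < p n" "p n \<le> 1" using elim p1 by auto
        have ln: "lam n = real n * p n powr d" "lam n \<ge> 1" using elim by (auto simp: lam_def)
        define good where "good = (\<lambda>E. Dgood n E \<and> (\<forall>q\<in>?Pairs.
           \<not> BadT n (nat \<lfloor>B * lam n ^ (card (fst (snd q)) - card (fst (fst q)))\<rfloor> + 1) (fst q) (snd q) E))"
        have "gnp_prob n (p n) good \<le> gnp_prob n (p n) (?target n)"
        proof (rule gnp_mono)
          fix E assume E: "E \<subseteq> all_pairs n" "good E"
          have "prop_i K n E \<and> prop_ii K n E \<and> prop_iii K B (lam n) n E \<and> prop_iv K n E \<and>
             prop_v K (real (card (fst K)) * (real (card {J. primal J K}) * B) ^ card (fst K)) (lam n) n E"
            by (rule good_target[OF pn ln B1 E(1)]) (use E(2) in \<open>auto simp: good_def\<close>)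
          then show "?target n E" using ln(1) by (simp add: Let_def C_def Q_def vK_def d_def)
        qed (use pn in auto)
        moreover have "gnp_prob n (p n) good = 1 - gnp_prob n (p n) (\<lambda>E. \<not> good E)" by (rule gnp_compl)
        moreover have "gnp_prob n (p n) (\<lambda>E. \<not> good E) \<le> bad n"
          unfolding good_def bad_def by (rule bad_bound[OF pn ln B_def[unfolded vK_def]])
        ultimately show ?case by linarith
      qed
      show "eventually (\<lambda>n. gnp_prob n (p n) (?target n) \<le> 1) sequentially"
        using gnp_le1 p0 p1 by simp
      have "(\<lambda>n. 1 - bad n) \<longlonglongrightarrow> 1 - 0" by (intro tendsto_diff tendsto_const bad0)
      then show "(\<lambda>n. 1 - bad n) \<longlonglongrightarrow> 1" by simp
    qed simp
  qed
qed

end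

theorem lemma19:
  fixes K :: "'a set \<times> 'a set set"
  assumes "graph K" and "balanced K" and "card (snd K) \<ge> 1"
  shows "\<exists>\<beta> B C :: real. \<beta> > 0 \<and> B > 0 \<and> C > 0 \<and>
    (\<forall>p :: nat \<Rightarrow> real. (\<forall>n. 0 \<le> p n \<and> p n \<le> 1) \<and>
       (\<lambda>n. real n powr (- 1 / dens K)) \<in> o(p) \<and>
       p \<in> O(\<lambda>n. real n powr (\<beta> - 1 / dens K)) \<longrightarrow>
       (\<lambda>n. gnp_prob n (p n) (\<lambda>E.
          let lam = real n * p n powr dens K in
          prop_i K n E \<and> prop_ii K n E \<and> prop_iii K B lam n E \<and>
          prop_iv K n E \<and> prop_v K C lam n E)) \<longlonglongrightarrow> 1)"
proof -
  interpret Kset K using assms by (rule Kset.intro)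
  show ?thesis by (rule main)
qed


end
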